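(* Let $k,d$ be positive integers with $k\le d$ and let $v\in\mathbb{C}^d$ be a unit vector. Then $$T_k(v)=\max\Big\{\langle m,v^\downarrow\rangle^2-\|m\|_{(k)}^2 \;:\; m\in\mathbb{R}^d,\ \|m\|_2=1\Big\}.$$
   Context: $v^\downarrow\in\mathbb{R}^d$ is the vector whose $i$-th entry $|v^\downarrow_i|$ is the $i$-th largest of $|v_1|,\dots,|v_d|$ (nonincreasing order). For $m\in\mathbb{R}^d$, the top-$k$ norm is $\|m\|_{(k)}=\big(\sum_{i=1}^k |m^\downarrow_i|^2\big)^{1/2}$. A vector is $k$-sparse if it has at most $k$ nonzero coordinates; $\mathcal{I}_k$ is the set of density matrices on $\mathbb{C}^d$ that are convex combinations of $uu^\dagger$ for $k$-sparse unit vectors $u$; $T_k(v)=\min_{\sigma\in\mathcal{I}_k}\tfrac12\|vv^\dagger-\sigma\|_1$. *)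

theory Defs
  imports "Jordan_Normal_Form.Schur_Decomposition"
begin

(* Trace norm ||A||_1 = tr sqrt(A^H A) = sum of the singular values of A,
   i.e. the sum of the square roots of the eigenvalues (with algebraic
   multiplicity) of the positive semidefinite matrix A^H A. *)
definition trace_norm :: "complex mat \<Rightarrow> real" where
  "trace_norm A = (SOME s. \<exists>as. char_poly (mat_adjoint A * A) = (\<Prod>a\<leftarrow>as. [:- a, 1:])
                              \<and> s = (\<Sum>a\<leftarrow>as. sqrt (cmod a)))"

definition outer :: "complex vec \<Rightarrow> complex mat" where
  "outer u = mat (dim_vec u) (dim_vec u) (\<lambda>(a,b). u $ a * cnj (u $ b))"

definition sparse :: "nat \<Rightarrow> complex vec \<Rightarrow> bool" where
  "sparse k u \<longleftrightarrow> card {i. i < dim_vec u \<and> u $ i \<noteq> 0} \<le> k"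

definition unit_cvec :: "complex vec \<Rightarrow> bool" where
  "unit_cvec u \<longleftrightarrow> (\<Sum>i<dim_vec u. (cmod (u $ i))\<^sup>2) = 1"

definition Ik :: "nat \<Rightarrow> nat \<Rightarrow> complex mat set" where
  "Ik d k = {\<sigma>. \<exists>n (p :: nat \<Rightarrow> real) (us :: nat \<Rightarrow> complex vec).
       (\<forall>i<n. p i \<ge> 0) \<and> (\<Sum>i<n. p i) = 1 \<and>
       (\<forall>i<n. us i \<in> carrier_vec d \<and> unit_cvec (us i) \<and> sparse k (us i)) \<and>
       \<sigma> = mat d d (\<lambda>(a,b). \<Sum>i<n. complex_of_real (p i) * (us i $ a * cnj (us i $ b)))}"

definition Tk :: "nat \<Rightarrow> complex vec \<Rightarrow> real" where
  "Tk k v = Inf ((\<lambda>\<sigma>. trace_norm (outer v - \<sigma>) / 2) ` Ik (dim_vec v) k)"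

definition vdown :: "complex vec \<Rightarrow> real list" where
  "vdown v = rev (sort (map cmod (list_of_vec v)))"

definition topk_norm :: "nat \<Rightarrow> real vec \<Rightarrow> real" where
  "topk_norm k m = sqrt (\<Sum>i<k. (rev (sort (map abs (list_of_vec m))) ! i)\<^sup>2)"

definition rinner_list :: "real vec \<Rightarrow> real list \<Rightarrow> real" where
  "rinner_list m w = (\<Sum>i<dim_vec m. m $ i * w ! i)"

end

theory Submission
  imports Defs "HOL-Combinatorics.List_Permutation"
begin

definition cip :: "nat \<Rightarrow> (nat \<Rightarrow> complex) \<Rightarrow> (nat \<Rightarrow> complex) \<Rightarrow> complex" where
  "cip d x y = (\<Sum>a<d. cnj (x a) * y a)"
definition nrm2 :: "nat \<Rightarrow> (nat \<Rightarrow> complex) \<Rightarrow> real" where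
  "nrm2 d x = (\<Sum>a<d. (cmod (x a))^2)"
definition mv :: "nat \<Rightarrow> (nat \<Rightarrow> nat \<Rightarrow> complex) \<Rightarrow> (nat \<Rightarrow> complex) \<Rightarrow> nat \<Rightarrow> complex" where
  "mv d A x a = (\<Sum>b<d. A a b * x b)"
definition qf :: "nat \<Rightarrow> (nat \<Rightarrow> nat \<Rightarrow> complex) \<Rightarrow> (nat \<Rightarrow> complex) \<Rightarrow> complex" where
  "qf d A x = cip d x (mv d A x)"
definition herm :: "nat \<Rightarrow> (nat \<Rightarrow> nat \<Rightarrow> complex) \<Rightarrow> bool" where
  "herm d A \<longleftrightarrow> (\<forall>a<d. \<forall>b<d. A b a = cnj (A a b))"
definition orthonormal :: "nat \<Rightarrow> nat \<Rightarrow> (nat \<Rightarrow> nat \<Rightarrow> complex) \<Rightarrow> bool" where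
  "orthonormal d n e \<longleftrightarrow> (\<forall>i<n. \<forall>j<n. cip d (e i) (e j) = (if i = j then 1 else 0))"

lemma cnj_mult_self: "cnj z * z = complex_of_real ((cmod z)^2)"
  by (metis complex_norm_square mult.commute of_real_power)

lemma cip_self: "cip d x x = complex_of_real (nrm2 d x)"
  unfolding cip_def nrm2_def by (simp add: cnj_mult_self)

lemma cip_cnj: "cip d y x = cnj (cip d x y)"
  unfolding cip_def by (simp add: mult.commute)

lemma nrm2_nonneg: "nrm2 d x \<ge> 0"
  unfolding nrm2_def by (simp add: sum_nonneg)

lemma cip_add_right: "cip d x (\<lambda>a. y a + z a) = cip d x y + cip d x z"
  unfolding cip_def by (simp add: distrib_left sum.distrib)
lemma cip_diff_right: "cip d x (\<lambda>a. y a - z a) = cip d x y - cip d x z"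
  unfolding cip_def by (simp add: right_diff_distrib sum_subtractf)
lemma cip_scale_right: "cip d x (\<lambda>a. c * y a) = c * cip d x y"
  unfolding cip_def by (simp add: sum_distrib_left algebra_simps)
lemma cip_add_left: "cip d (\<lambda>a. y a + z a) x = cip d y x + cip d z x"
  unfolding cip_def by (simp add: distrib_right sum.distrib)
lemma cip_diff_left: "cip d (\<lambda>a. y a - z a) x = cip d y x - cip d z x"
  unfolding cip_def by (simp add: left_diff_distrib sum_subtractf)
lemma cip_scale_left: "cip d (\<lambda>a. c * y a) x = cnj c * cip d y x"
  unfolding cip_def by (simp add: sum_distrib_left algebra_simps)

lemma cip_cong: "(\<And>a. a < d \<Longrightarrow> x a = x' a) \<Longrightarrow> (\<And>a. a < d \<Longrightarrow> y a = y' a) \<Longrightarrow> cip d x y = cip d x' y'"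
  unfolding cip_def by (rule sum.cong) auto

lemma nrm2_cong: "(\<And>a. a < d \<Longrightarrow> x a = x' a) \<Longrightarrow> nrm2 d x = nrm2 d x'"
  unfolding nrm2_def by (rule sum.cong) auto

lemma nrm2_scale: "nrm2 d (\<lambda>a. c * x a) = (cmod c)^2 * nrm2 d x"
  unfolding nrm2_def by (simp add: sum_distrib_left norm_mult power_mult_distrib)

lemma herm_mv_sym: assumes "herm d A" shows "cip d x (mv d A y) = cip d (mv d A x) y"
proof -
  have "cip d x (mv d A y) = (\<Sum>a<d. \<Sum>b<d. cnj (x a) * A a b * y b)"
    unfolding cip_def mv_def by (simp add: sum_distrib_left mult.assoc)
  also have "\<dots> = (\<Sum>b<d. \<Sum>a<d. cnj (x a) * A a b * y b)" by (rule sum.swap)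
  also have "\<dots> = (\<Sum>b<d. \<Sum>a<d. cnj (A b a * x a) * y b)"
  proof (intro sum.cong refl)
    fix a b assume "b \<in> {..<d}" "a \<in> {..<d}"
    have "A a b = cnj (A b a)" using assms[unfolded herm_def, rule_format, of b a] \<open>b \<in> {..<d}\<close> \<open>a \<in> {..<d}\<close> by simp
    thus "cnj (x a) * A a b * y b = cnj (A b a * x a) * y b" by simp
  qed
  also have "\<dots> = cip d (mv d A x) y"
    unfolding cip_def mv_def cnj_sum sum_distrib_right ..
  finally show ?thesis .
qed

lemma herm_qf_real: assumes "herm d A" shows "qf d A x = complex_of_real (Re (qf d A x))"
proof -
  have "cnj (qf d A x) = cip d (mv d A x) x" by (simp add: qf_def cip_cnj[of d "mv d A x" x])
  also have "\<dots> = qf d A x" unfolding qf_def herm_mv_sym[OF assms] ..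
  finally have "cnj (qf d A x) = qf d A x" .
  hence "Im (qf d A x) = 0" by (simp add: complex_eq_iff)
  thus ?thesis by (simp add: complex_eq_iff)
qed

lemma cmod_le_nrm2: assumes "a < d" shows "(cmod (x a))^2 \<le> nrm2 d x"
  unfolding nrm2_def using assms by (intro member_le_sum) auto

lemma cmod_le_one: assumes "a < d" "nrm2 d x = 1" shows "cmod (x a) \<le> 1"
  using cmod_le_nrm2[OF assms(1), of x] assms(2) by (simp add: power_le_one_iff)

lemma real_BW: fixes s :: "nat \<Rightarrow> real" assumes "\<And>k. \<bar>s k\<bar> \<le> B"
  shows "\<exists>r. strict_mono r \<and> convergent (\<lambda>k. s (r k))"
proof -
  obtain r where r: "strict_mono r" "monoseq (\<lambda>n. s (r n))" using seq_monosub by blast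
  have "Bseq (\<lambda>n. s (r n))" using assms by (intro BseqI'[of _ B]) auto
  with r show ?thesis using Bseq_monoseq_convergent by blast
qed

lemma complex_BW: fixes s :: "nat \<Rightarrow> complex" assumes "\<And>k. cmod (s k) \<le> B"
  shows "\<exists>r l. strict_mono r \<and> (\<lambda>k. s (r k)) \<longlonglongrightarrow> l"
proof -
  have "\<bar>Re (s k)\<bar> \<le> B" for k using assms abs_Re_le_cmod order_trans by blast
  then obtain r1 where r1: "strict_mono r1" "convergent (\<lambda>k. Re (s (r1 k)))" using real_BW[of "\<lambda>k. Re (s k)" B] by blast
  have "\<bar>Im (s (r1 k))\<bar> \<le> B" for k using assms abs_Im_le_cmod order_trans by blast
  then obtain r2 where r2: "strict_mono r2" "convergent (\<lambda>k. Im (s (r1 (r2 k))))" using real_BW[of "\<lambda>k. Im (s (r1 k))" B] by blast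
  obtain a where a: "(\<lambda>k. Re (s (r1 k))) \<longlonglongrightarrow> a" using r1 convergent_def by blast
  obtain b where b: "(\<lambda>k. Im (s (r1 (r2 k)))) \<longlonglongrightarrow> b" using r2 convergent_def by blast
  have a2: "(\<lambda>k. Re (s (r1 (r2 k)))) \<longlonglongrightarrow> a"
    using LIMSEQ_subseq_LIMSEQ[OF a r2(1)] by (simp add: o_def)
  have "(\<lambda>k. Complex (Re (s (r1 (r2 k)))) (Im (s (r1 (r2 k))))) \<longlonglongrightarrow> Complex a b"
    by (rule tendsto_Complex[OF a2 b])
  hence "(\<lambda>k. s ((r1 \<circ> r2) k)) \<longlonglongrightarrow> Complex a b" by simp
  moreover have "strict_mono (r1 \<circ> r2)" using r1 r2 by (simp add: strict_mono_o)
  ultimately show ?thesis by blast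
qed

lemma multi_BW:
  fixes X :: "nat \<Rightarrow> 'i \<Rightarrow> complex"
  assumes "finite I" "\<And>k i. i \<in> I \<Longrightarrow> cmod (X k i) \<le> B"
  shows "\<exists>r l. strict_mono r \<and> (\<forall>i\<in>I. (\<lambda>k. X (r k) i) \<longlonglongrightarrow> l i)"
  using assms
proof (induction I arbitrary: X rule: finite_induct)
  case empty
  then show ?case by (auto intro: strict_mono_id)
next
  case (insert j I)
  from insert.IH[of X] insert.prems obtain r l where
    r: "strict_mono r" "\<forall>i\<in>I. (\<lambda>k. X (r k) i) \<longlonglongrightarrow> l i" by auto
  have "cmod (X (r k) j) \<le> B" for k using insert.prems by auto
  then obtain r2 lj where r2: "strict_mono r2" "(\<lambda>k. X (r (r2 k)) j) \<longlonglongrightarrow> lj"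
    using complex_BW[of "\<lambda>k. X (r k) j" B] by blast
  have "\<forall>i\<in>insert j I. (\<lambda>k. X ((r \<circ> r2) k) i) \<longlonglongrightarrow> (l(j := lj)) i"
  proof
    fix i assume "i \<in> insert j I"
    show "(\<lambda>k. X ((r \<circ> r2) k) i) \<longlonglongrightarrow> (l(j := lj)) i"
    proof (cases "i = j")
      case True thus ?thesis using r2 by simp
    next
      case False
      hence "i \<in> I" using \<open>i \<in> insert j I\<close> by auto
      thus ?thesis using LIMSEQ_subseq_LIMSEQ[OF r(2)[rule_format, OF \<open>i \<in> I\<close>] r2(1)] False
        by (simp add: o_def)
    qed
  qed
  moreover have "strict_mono (r \<circ> r2)" using r r2 by (simp add: strict_mono_o)
  ultimately show ?case by blast
qed

lemma attain_max:
  fixes \<phi> :: "('i \<Rightarrow> complex) \<Rightarrow> real"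
  assumes fin: "finite I" and ne: "x0 \<in> S" and bnd: "\<And>x i. x \<in> S \<Longrightarrow> i \<in> I \<Longrightarrow> cmod (x i) \<le> B"
    and clo: "\<And>X l. (\<And>k. X k \<in> S) \<Longrightarrow> (\<forall>i\<in>I. (\<lambda>k. X k i) \<longlonglongrightarrow> l i) \<Longrightarrow> \<exists>y\<in>S. \<forall>i\<in>I. y i = l i"
    and cont: "\<And>X y. (\<forall>i\<in>I. (\<lambda>k. X k i) \<longlonglongrightarrow> y i) \<Longrightarrow> (\<lambda>k. \<phi> (X k)) \<longlonglongrightarrow> \<phi> y"
    and bdd: "\<And>x. x \<in> S \<Longrightarrow> \<phi> x \<le> C"
  shows "\<exists>x\<in>S. \<forall>y\<in>S. \<phi> y \<le> \<phi> x"
proof -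
  define s where "s = Sup (\<phi> ` S)"
  have bddA: "bdd_above (\<phi> ` S)" using bdd by (intro bdd_aboveI[of _ C]) auto
  have neS: "\<phi> ` S \<noteq> {}" using ne by auto
  have up: "\<phi> y \<le> s" if "y \<in> S" for y unfolding s_def using bddA that by (auto intro: cSup_upper)
  have "\<exists>x\<in>S. s - 1 / (real k + 1) < \<phi> x" for k
  proof -
    have "s - 1 / (real k + 1) < s" by simp
    then obtain z where "z \<in> \<phi> ` S" "s - 1 / (real k + 1) < z"
      unfolding s_def using less_cSupE[OF _ neS] by blast
    thus ?thesis by auto
  qed
  then obtain X where X: "\<And>k. X k \<in> S" "\<And>k. s - 1 / (real k + 1) < \<phi> (X k)" by metis
  obtain r l where rl: "strict_mono r" "\<forall>i\<in>I. (\<lambda>k. X (r k) i) \<longlonglongrightarrow> l i"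
    using multi_BW[OF fin, of X B] bnd X by blast
  obtain y where y: "y \<in> S" "\<forall>i\<in>I. y i = l i" using clo[of "\<lambda>k. X (r k)" l] X rl by blast
  have c1: "(\<lambda>k. \<phi> (X (r k))) \<longlonglongrightarrow> \<phi> y" using cont[of "\<lambda>k. X (r k)" y] rl y by auto
  have lo: "s - 1 / (real k + 1) \<le> \<phi> (X (r k))" for k
  proof -
    have "k \<le> r k" using rl(1) by (simp add: seq_suble)
    hence "1 / (real (r k) + 1) \<le> 1 / (real k + 1)" by (simp add: frac_le)
    thus ?thesis using X(2)[of "r k"] by linarith
  qed
  have "(\<lambda>k. s - 1 / (real k + 1)) \<longlonglongrightarrow> s - 0"
    by (intro tendsto_diff tendsto_const) (use LIMSEQ_inverse_real_of_nat in \<open>simp add: inverse_eq_divide add.commute\<close>)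
  hence lim0: "(\<lambda>k. s - 1 / (real k + 1)) \<longlonglongrightarrow> s" by simp
  have up2: "\<forall>k. \<phi> (X (r k)) \<le> s" using up X(1) by blast
  have c2: "(\<lambda>k. \<phi> (X (r k))) \<longlonglongrightarrow> s"
    by (rule tendsto_sandwich[OF always_eventually always_eventually lim0 tendsto_const]) (use lo up2 in auto)
  have "\<phi> y = s" using LIMSEQ_unique[OF c1 c2] .
  thus ?thesis using y up by auto
qed

lemma cip_delta: "a < d \<Longrightarrow> cip d x (\<lambda>b. if b = a then 1 else 0) = cnj (x a)"
  unfolding cip_def by (simp add: if_distrib sum.delta cong: if_cong)

lemma nrm2_zero_iff: "nrm2 d x = 0 \<longleftrightarrow> (\<forall>a<d. x a = 0)"
  unfolding nrm2_def by (auto simp: sum_nonneg_eq_0_iff)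

lemma cip_sum_right: "cip d x (\<lambda>b. \<Sum>j\<in>J. f j b) = (\<Sum>j\<in>J. cip d x (f j))"
  unfolding cip_def by (simp add: sum_distrib_left sum.swap[of _ J])

lemma normalize_nrm2: assumes "nrm2 d x > 0"
  shows "nrm2 d (\<lambda>a. complex_of_real (1 / sqrt (nrm2 d x)) * x a) = 1"
  unfolding nrm2_scale norm_of_real using assms by (simp add: power_divide)

lemma exists_orth:
  assumes nd: "n < d" and on: "orthonormal d n e"
  shows "\<exists>w. nrm2 d w = 1 \<and> (\<forall>j<n. cip d (e j) w = 0)"
proof -
  define pr where "pr a = (\<lambda>b. (if b = a then 1 else 0) - (\<Sum>j<n. cnj (e j a) * e j b))" for a
  have orth_pr: "cip d (e i) (pr a) = 0" if "i < n" "a < d" for i a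
  proof -
    have "cip d (e i) (pr a) = cnj (e i a) - (\<Sum>j<n. cnj (e j a) * cip d (e i) (e j))"
      unfolding pr_def using that
      by (simp add: cip_diff_right cip_delta cip_sum_right cip_scale_right)
    also have "(\<Sum>j<n. cnj (e j a) * cip d (e i) (e j)) = (\<Sum>j<n. if j = i then cnj (e j a) else 0)"
      using on that unfolding orthonormal_def by (intro sum.cong) auto
    hence "cnj (e i a) - (\<Sum>j<n. cnj (e j a) * cip d (e i) (e j)) = cnj (e i a) - cnj (e i a)"
      using that by (simp add: sum.delta)
    finally show ?thesis by simp
  qed
  show ?thesis
  proof (cases "\<exists>a<d. nrm2 d (pr a) \<noteq> 0")
    case True
    then obtain a where a: "a < d" "nrm2 d (pr a) \<noteq> 0" by blast
    define c where "c = complex_of_real (1 / sqrt (nrm2 d (pr a)))"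
    have pos: "nrm2 d (pr a) > 0" using a nrm2_nonneg[of d "pr a"] by linarith
    have "nrm2 d (\<lambda>b. c * pr a b) = 1"
      unfolding c_def using normalize_nrm2[OF pos] .
    moreover have "\<forall>j<n. cip d (e j) (\<lambda>b. c * pr a b) = 0"
      using orth_pr a by (simp add: cip_scale_right)
    ultimately show ?thesis by blast
  next
    case False
    hence z: "pr a a = 0" if "a < d" for a using that nrm2_zero_iff by blast
    have one: "(\<Sum>j<n. complex_of_real ((cmod (e j a))^2)) = 1" if "a < d" for a
      using z[OF that] unfolding pr_def by (simp add: cnj_mult_self)
    have "complex_of_real (real d) = (\<Sum>a<d. \<Sum>j<n. complex_of_real ((cmod (e j a))^2))"
      using one by simp
    also have "\<dots> = (\<Sum>j<n. complex_of_real (nrm2 d (e j)))"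
      unfolding nrm2_def by (simp add: sum.swap[of _ "{..<d}"])
    also have "\<dots> = (\<Sum>j<n. cip d (e j) (e j))" by (simp add: cip_self)
    also have "\<dots> = of_nat n" using on unfolding orthonormal_def by simp
    finally have "d = n" by (metis of_nat_eq_iff of_real_of_nat_eq)
    thus ?thesis using nd by simp
  qed
qed

lemma qf_expand: "qf d A x = (\<Sum>a<d. \<Sum>b<d. cnj (x a) * A a b * x b)"
  unfolding qf_def cip_def mv_def by (simp add: sum_distrib_left mult.assoc)

lemma qf_bound: assumes "nrm2 d x = 1" shows "cmod (qf d A x) \<le> (\<Sum>a<d. \<Sum>b<d. cmod (A a b))"
proof -
  have "cmod (qf d A x) \<le> (\<Sum>a<d. cmod (\<Sum>b<d. cnj (x a) * A a b * x b))"
    unfolding qf_expand by (rule norm_sum)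
  also have "\<dots> \<le> (\<Sum>a<d. \<Sum>b<d. cmod (cnj (x a) * A a b * x b))"
    by (intro sum_mono norm_sum)
  also have "\<dots> \<le> (\<Sum>a<d. \<Sum>b<d. cmod (A a b))"
  proof (intro sum_mono)
    fix a b assume "a \<in> {..<d}" "b \<in> {..<d}"
    hence "cmod (x a) \<le> 1" "cmod (x b) \<le> 1" using cmod_le_one assms by auto
    hence "cmod (x a) * cmod (A a b) * cmod (x b) \<le> cmod (A a b) * 1"
      by (intro mult_mono mult_left_le_one_le) auto
    thus "cmod (cnj (x a) * A a b * x b) \<le> cmod (A a b)"
      by (simp add: norm_mult)
  qed
  finally show ?thesis .
qed

lemma tendsto_cip:
  assumes "\<forall>i<d. (\<lambda>k. X k i) \<longlonglongrightarrow> x i" "\<forall>i<d. (\<lambda>k. Y k i) \<longlonglongrightarrow> y i"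
  shows "(\<lambda>k. cip d (X k) (Y k)) \<longlonglongrightarrow> cip d x y"
  unfolding cip_def using assms by (intro tendsto_sum tendsto_mult tendsto_cnj) auto

lemma tendsto_nrm2:
  assumes "\<forall>i<d. (\<lambda>k. X k i) \<longlonglongrightarrow> x i"
  shows "(\<lambda>k. nrm2 d (X k)) \<longlonglongrightarrow> nrm2 d x"
  unfolding nrm2_def using assms by (intro tendsto_sum tendsto_power tendsto_norm) auto

lemma tendsto_qf:
  assumes "\<forall>i<d. (\<lambda>k. X k i) \<longlonglongrightarrow> x i"
  shows "(\<lambda>k. qf d A (X k)) \<longlonglongrightarrow> qf d A x"
  unfolding qf_expand using assms by (intro tendsto_sum tendsto_mult tendsto_cnj tendsto_const) auto

lemma mv_lin: "mv d A (\<lambda>b. x b + c * y b) a = mv d A x a + c * mv d A y a"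
  unfolding mv_def by (simp add: sum.distrib sum_distrib_left algebra_simps)

lemma qf_scale: "qf d A (\<lambda>a. c * x a) = cnj c * c * qf d A x"
  unfolding qf_expand by (simp add: sum_distrib_left algebra_simps)

lemma qf_cong: "(\<And>a. a < d \<Longrightarrow> x a = x' a) \<Longrightarrow> qf d A x = qf d A x'"
  unfolding qf_expand by (intro sum.cong refl) auto

lemma cip_expand2:
  "cip d (\<lambda>a. x a + of_real t * y a) (\<lambda>a. u a + of_real t * w a)
   = cip d x u + of_real t * cip d x w + of_real t * cip d y u + of_real (t^2) * cip d y w"
  unfolding cip_def by (simp add: sum.distrib sum_distrib_left algebra_simps power2_eq_square)

lemma eig_step:
  assumes h: "herm d A" and nd: "n < d" and on: "orthonormal d n e"
    and ev: "\<forall>j<n. \<forall>a<d. mv d A (e j) a = complex_of_real (t j) * e j a"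
  shows "\<exists>w l. nrm2 d w = 1 \<and> (\<forall>j<n. cip d (e j) w = 0) \<and> (\<forall>a<d. mv d A w a = complex_of_real l * w a)"
proof -
  define S where "S = {w. nrm2 d w = 1 \<and> (\<forall>j<n. cip d (e j) w = 0)}"
  obtain w0 where w0: "w0 \<in> S" using exists_orth[OF nd on] unfolding S_def by blast
  have "\<exists>x\<in>S. \<forall>y\<in>S. Re (qf d A y) \<le> Re (qf d A x)"
  proof (rule attain_max[where I="{..<d}" and B=1 and C="\<Sum>a<d. \<Sum>b<d. cmod (A a b)", OF _ w0])
    show "cmod (x i) \<le> 1" if "x \<in> S" "i \<in> {..<d}" for x i
      using that cmod_le_one unfolding S_def by auto
  next
    fix X :: "nat \<Rightarrow> nat \<Rightarrow> complex" and l assume X: "\<And>k. X k \<in> S" and l: "\<forall>i\<in>{..<d}. (\<lambda>k. X k i) \<longlonglongrightarrow> l i"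
    have l': "\<forall>i<d. (\<lambda>k. X k i) \<longlonglongrightarrow> l i" using l by auto
    have "nrm2 d l = 1"
      using LIMSEQ_unique[OF tendsto_nrm2[OF l']] X unfolding S_def by auto
    moreover have "cip d (e j) l = 0" if "j < n" for j
      using LIMSEQ_unique[OF tendsto_cip[OF _ l', of "\<lambda>k. e j" "e j"]] X that unfolding S_def by auto
    ultimately show "\<exists>y\<in>S. \<forall>i\<in>{..<d}. y i = l i" unfolding S_def by auto
  next
    fix X :: "nat \<Rightarrow> nat \<Rightarrow> complex" and y assume "\<forall>i\<in>{..<d}. (\<lambda>k. X k i) \<longlonglongrightarrow> y i"
    hence "\<forall>i<d. (\<lambda>k. X k i) \<longlonglongrightarrow> y i" by auto
    thus "(\<lambda>k. Re (qf d A (X k))) \<longlonglongrightarrow> Re (qf d A y)" by (intro tendsto_Re tendsto_qf)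
  next
    fix x assume "x \<in> S"
    hence "cmod (qf d A x) \<le> (\<Sum>a<d. \<Sum>b<d. cmod (A a b))" using qf_bound unfolding S_def by auto
    thus "Re (qf d A x) \<le> (\<Sum>a<d. \<Sum>b<d. cmod (A a b))" using complex_Re_le_cmod order_trans by blast
  qed auto
  then obtain x where xS: "x \<in> S" and xmax: "\<And>y. y \<in> S \<Longrightarrow> Re (qf d A y) \<le> Re (qf d A x)" by blast
  define l where "l = Re (qf d A x)"
  have x1: "nrm2 d x = 1" and xo: "\<And>j. j < n \<Longrightarrow> cip d (e j) x = 0" using xS unfolding S_def by auto
  have key: "Re (qf d A z) \<le> l * nrm2 d z" if zo: "\<forall>j<n. cip d (e j) z = 0" for z
  proof (cases "nrm2 d z = 0")
    case True
    hence "qf d A z = qf d A (\<lambda>a. 0)" using nrm2_zero_iff by (intro qf_cong) auto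
    also have "\<dots> = 0" unfolding qf_expand by simp
    finally show ?thesis using True by simp
  next
    case False
    hence pos: "nrm2 d z > 0" using nrm2_nonneg[of d z] by linarith
    define c where "c = complex_of_real (1 / sqrt (nrm2 d z))"
    have "\<forall>j<n. cip d (e j) (\<lambda>a. c * z a) = 0" using zo by (simp only: cip_scale_right) simp
    hence "(\<lambda>a. c * z a) \<in> S" unfolding S_def using normalize_nrm2[OF pos] unfolding c_def by simp
    hence "Re (qf d A (\<lambda>a. c * z a)) \<le> l" using xmax l_def by auto
    moreover have "qf d A (\<lambda>a. c * z a) = complex_of_real (1 / nrm2 d z) * qf d A z"
      unfolding qf_scale c_def using pos by (simp flip: of_real_mult)
    ultimately have "Re (qf d A z) / nrm2 d z \<le> l" by simp
    thus ?thesis using pos by (simp add: divide_le_eq mult.commute)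
  qed
  define y where "y = (\<lambda>a. mv d A x a - complex_of_real l * x a)"
  have Ax: "mv d A x a = y a + complex_of_real l * x a" for a unfolding y_def by simp
  have qfx: "qf d A x = complex_of_real l" unfolding l_def using herm_qf_real[OF h] by simp
  have yo: "cip d (e j) y = 0" if "j < n" for j
  proof -
    have "cip d (e j) (mv d A x) = cip d (mv d A (e j)) x" by (rule herm_mv_sym[OF h])
    also have "\<dots> = cip d (\<lambda>a. complex_of_real (t j) * e j a) x"
      using ev that by (intro cip_cong) auto
    also have "\<dots> = 0" using xo[OF that] by (simp add: cip_scale_left)
    finally show ?thesis unfolding y_def using xo[OF that] by (simp add: cip_diff_right cip_scale_right)
  qed
  have xy: "cip d x y = 0"
    unfolding y_def using qfx x1 by (simp add: cip_diff_right cip_scale_right cip_self qf_def[symmetric])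
  have yx: "cip d y x = 0" using xy cip_cnj[of d y x] by simp
  define N where "N = nrm2 d y"
  have yAx: "cip d y (mv d A x) = complex_of_real N"
  proof -
    have "cip d y (mv d A x) = cip d y (\<lambda>a. y a + complex_of_real l * x a)" using Ax by presburger
    thus ?thesis unfolding N_def using yx by (simp add: cip_add_right cip_scale_right cip_self)
  qed
  have xAy: "cip d x (mv d A y) = complex_of_real N"
  proof -
    have "cip d x (mv d A y) = cip d (mv d A x) y" by (rule herm_mv_sym[OF h])
    also have "\<dots> = cip d (\<lambda>a. y a + complex_of_real l * x a) y" using Ax by presburger
    finally show ?thesis unfolding N_def using xy by (simp add: cip_add_left cip_scale_left cip_self)
  qed
  define q where "q = Re (qf d A y)"
  have ineq: "2 * s * N \<le> s^2 * (l * N - q)" for s :: real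
  proof -
    define z where "z = (\<lambda>a. x a + complex_of_real s * y a)"
    have zo: "\<forall>j<n. cip d (e j) z = 0" unfolding z_def using xo yo by (simp add: cip_add_right cip_scale_right)
    have nz: "complex_of_real (nrm2 d z) = 1 + complex_of_real (s^2 * N)"
      unfolding cip_self[symmetric] z_def cip_expand2 using xy yx x1 by (simp add: cip_self N_def)
    have Az: "mv d A z a = mv d A x a + complex_of_real s * mv d A y a" for a
      unfolding z_def by (rule mv_lin)
    have "qf d A z = cip d z (\<lambda>a. mv d A x a + complex_of_real s * mv d A y a)"
      unfolding qf_def using Az by presburger
    also have "\<dots> = qf d A x + complex_of_real s * N + complex_of_real s * N + complex_of_real (s^2) * qf d A y"
      unfolding z_def cip_expand2 qf_def using xAy yAx by simp
    finally have "Re (qf d A z) = l + 2 * s * N + s^2 * q"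
      using qfx unfolding q_def by simp
    moreover have "nrm2 d z = 1 + s^2 * N" using nz by (metis of_real_add of_real_1 of_real_eq_iff)
    ultimately show ?thesis using key[OF zo] by (simp add: algebra_simps)
  qed
  have "N = 0"
  proof (rule ccontr)
    assume "N \<noteq> 0"
    hence Npos: "N > 0" using nrm2_nonneg[of d y] unfolding N_def by linarith
    define C where "C = \<bar>l * N - q\<bar> + 1"
    have Cpos: "C > 0" unfolding C_def by simp
    define s where "s = N / C"
    have spos: "s > 0" unfolding s_def using Npos Cpos by simp
    have "2 * s * N \<le> s^2 * (l * N - q)" by (rule ineq)
    hence "2 * N \<le> s * (l * N - q)" using spos by (simp add: power2_eq_square mult.assoc)
    also have "\<dots> \<le> s * \<bar>l * N - q\<bar>" using spos by (intro mult_left_mono) auto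
    also have "\<dots> < s * C" using spos unfolding C_def by simp
    also have "\<dots> = N" unfolding s_def using Cpos by simp
    finally show False using Npos by simp
  qed
  hence "\<forall>a<d. y a = 0" unfolding N_def using nrm2_zero_iff by blast
  hence "\<forall>a<d. mv d A x a = complex_of_real l * x a" using Ax by simp
  thus ?thesis using x1 xo by blast
qed

lemma mult_cnj_self: "z * cnj z = complex_of_real ((cmod z)^2)"
  by (metis complex_norm_square of_real_power)

lemma spectral_partial:
  assumes h: "herm d A" shows "n \<le> d \<Longrightarrow> \<exists>e t. orthonormal d n e \<and> (\<forall>j<n. \<forall>a<d. mv d A (e j) a = complex_of_real (t j) * e j a)"
proof (induction n)
  case 0 show ?case unfolding orthonormal_def by auto
next
  case (Suc n)
  then obtain e t where on: "orthonormal d n e" and ev: "\<forall>j<n. \<forall>a<d. mv d A (e j) a = complex_of_real (t j) * e j a" by auto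
  obtain w l where w: "nrm2 d w = 1" "\<forall>j<n. cip d (e j) w = 0" "\<forall>a<d. mv d A w a = complex_of_real l * w a"
    using eig_step[OF h _ on ev] Suc.prems by auto
  define e' where "e' = e(n := w)"
  define t' where "t' = t(n := l)"
  have "orthonormal d (Suc n) e'"
    unfolding orthonormal_def
  proof (intro allI impI)
    fix i j assume "i < Suc n" "j < Suc n"
    thus "cip d (e' i) (e' j) = (if i = j then 1 else 0)"
      using on w unfolding orthonormal_def e'_def
      by (cases "i = n"; cases "j = n") (auto simp: cip_self cip_cnj[of d w])
  qed
  moreover have "\<forall>j<Suc n. \<forall>a<d. mv d A (e' j) a = complex_of_real (t' j) * e' j a"
    using ev w unfolding e'_def t'_def by (auto simp: less_Suc_eq)
  ultimately show ?case by blast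
qed

theorem spectral:
  assumes "herm d A" shows "\<exists>e t. orthonormal d d e \<and> (\<forall>j<d. \<forall>a<d. mv d A (e j) a = complex_of_real (t j) * e j a)"
  using spectral_partial[OF assms] by auto

lemma adj_idx: assumes "A \<in> carrier_mat n m"
  shows "mat_adjoint A = mat m n (\<lambda>(i,j). cnj (A $$ (j,i)))"
  using assms unfolding mat_adjoint_def
  by (intro eq_matI) (auto simp: mat_of_rows_index)

lemma completeness:
  assumes on: "orthonormal d d e" and ab: "a < d" "b < d"
  shows "(\<Sum>j<d. e j a * cnj (e j b)) = (if a = b then 1 else 0)"
proof -
  define U where "U = mat d d (\<lambda>(a,j). e j a)"
  have U: "U \<in> carrier_mat d d" unfolding U_def by simp
  have aU: "mat_adjoint U \<in> carrier_mat d d" using adj_idx[OF U] by simp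
  have "mat_adjoint U * U = 1\<^sub>m d"
  proof (rule eq_matI)
    fix i j assume ij: "i < dim_row (1\<^sub>m d)" "j < dim_col (1\<^sub>m d)"
    have "(mat_adjoint U * U) $$ (i,j) = (\<Sum>a<d. cnj (e i a) * e j a)"
      using ij U unfolding adj_idx[OF U]
      by (simp add: scalar_prod_def U_def atLeast0LessThan)
    also have "\<dots> = cip d (e i) (e j)" unfolding cip_def ..
    also have "\<dots> = 1\<^sub>m d $$ (i,j)" using on ij unfolding orthonormal_def by simp
    finally show "(mat_adjoint U * U) $$ (i,j) = 1\<^sub>m d $$ (i,j)" .
  qed (use aU U in auto)
  hence I: "U * mat_adjoint U = 1\<^sub>m d" using mat_mult_left_right_inverse[OF aU U] by simp
  have "(U * mat_adjoint U) $$ (a,b) = (\<Sum>j<d. e j a * cnj (e j b))"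
    using ab U unfolding adj_idx[OF U] by (simp add: scalar_prod_def U_def atLeast0LessThan)
  thus ?thesis using I ab by simp
qed

locale eigsys =
  fixes d :: nat and A :: "nat \<Rightarrow> nat \<Rightarrow> complex" and e :: "nat \<Rightarrow> nat \<Rightarrow> complex" and t :: "nat \<Rightarrow> real"
  assumes on: "orthonormal d d e"
    and ev: "\<And>j a. j < d \<Longrightarrow> a < d \<Longrightarrow> mv d A (e j) a = complex_of_real (t j) * e j a"
begin

lemma expand: "a < d \<Longrightarrow> x a = (\<Sum>j<d. cip d (e j) x * e j a)"
proof -
  assume a: "a < d"
  have "(\<Sum>j<d. cip d (e j) x * e j a) = (\<Sum>j<d. \<Sum>b<d. x b * (e j a * cnj (e j b)))"
    unfolding cip_def by (intro sum.cong refl) (simp add: sum_distrib_left mult.commute mult.left_commute)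
  also have "\<dots> = (\<Sum>b<d. \<Sum>j<d. x b * (e j a * cnj (e j b)))" by (rule sum.swap)
  also have "\<dots> = (\<Sum>b<d. x b * (\<Sum>j<d. e j a * cnj (e j b)))"
    by (simp add: sum_distrib_left)
  also have "\<dots> = (\<Sum>b<d. if a = b then x b else 0)"
    using completeness[OF on a] by (intro sum.cong) auto
  also have "\<dots> = x a" using a by simp
  finally show ?thesis by simp
qed

lemma parseval: "cip d x y = (\<Sum>j<d. cnj (cip d (e j) x) * cip d (e j) y)"
proof -
  have "cip d x y = cip d x (\<lambda>a. \<Sum>j<d. cip d (e j) y * e j a)"
    using expand by (intro cip_cong) auto
  also have "\<dots> = (\<Sum>j<d. cip d (e j) y * cip d x (e j))"
    by (simp add: cip_sum_right cip_scale_right)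
  also have "\<dots> = (\<Sum>j<d. cnj (cip d (e j) x) * cip d (e j) y)"
    by (intro sum.cong refl) (simp add: cip_cnj[of d x])
  finally show ?thesis .
qed

lemma nrm2_eig: "nrm2 d x = (\<Sum>j<d. (cmod (cip d (e j) x))^2)"
proof -
  have "cip d x x = (\<Sum>j<d. cnj (cip d (e j) x) * cip d (e j) x)" by (rule parseval)
  hence "complex_of_real (nrm2 d x) = complex_of_real (\<Sum>j<d. (cmod (cip d (e j) x))^2)"
    by (simp add: cip_self cnj_mult_self)
  thus ?thesis using of_real_eq_iff by blast
qed

lemma mv_eig: "a < d \<Longrightarrow> mv d A x a = (\<Sum>j<d. complex_of_real (t j) * cip d (e j) x * e j a)"
proof -
  assume a: "a < d"
  have "mv d A x a = mv d A (\<lambda>b. \<Sum>j<d. cip d (e j) x * e j b) a"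
    unfolding mv_def using expand by (intro sum.cong) auto
  also have "\<dots> = (\<Sum>b<d. \<Sum>j<d. cip d (e j) x * (A a b * e j b))"
    unfolding mv_def by (simp add: sum_distrib_left algebra_simps)
  also have "\<dots> = (\<Sum>j<d. \<Sum>b<d. cip d (e j) x * (A a b * e j b))" by (rule sum.swap)
  also have "\<dots> = (\<Sum>j<d. cip d (e j) x * mv d A (e j) a)"
    unfolding mv_def by (simp add: sum_distrib_left)
  also have "\<dots> = (\<Sum>j<d. complex_of_real (t j) * cip d (e j) x * e j a)"
    using ev a by (intro sum.cong) auto
  finally show ?thesis .
qed

lemma qf_eig: "qf d A x = complex_of_real (\<Sum>j<d. t j * (cmod (cip d (e j) x))^2)"
proof -
  have "qf d A x = cip d x (\<lambda>a. \<Sum>j<d. complex_of_real (t j) * cip d (e j) x * e j a)"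
    unfolding qf_def using mv_eig by (intro cip_cong) auto
  also have "\<dots> = (\<Sum>j<d. complex_of_real (t j) * cip d (e j) x * cip d x (e j))"
    by (simp add: cip_sum_right cip_scale_right)
  also have "\<dots> = (\<Sum>j<d. complex_of_real (t j) * complex_of_real ((cmod (cip d (e j) x))^2))"
    by (intro sum.cong refl) (simp add: cip_cnj[of d x] mult_cnj_self mult.assoc)
  finally show ?thesis by simp
qed

lemma entry_eig: "a < d \<Longrightarrow> b < d \<Longrightarrow> A a b = (\<Sum>j<d. complex_of_real (t j) * e j a * cnj (e j b))"
proof -
  assume ab: "a < d" "b < d"
  have "A a b = mv d A (\<lambda>c. if c = b then 1 else 0) a"
    unfolding mv_def using ab by (simp add: if_distrib sum.delta cong: if_cong)
  also have "\<dots> = (\<Sum>j<d. complex_of_real (t j) * cip d (e j) (\<lambda>c. if c = b then 1 else 0) * e j a)"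
    by (rule mv_eig[OF ab(1)])
  also have "\<dots> = (\<Sum>j<d. complex_of_real (t j) * e j a * cnj (e j b))"
    using ab by (intro sum.cong refl) (simp add: cip_delta)
  finally show ?thesis .
qed

lemma trace_eig: "(\<Sum>a<d. A a a) = complex_of_real (\<Sum>j<d. t j)"
proof -
  have "(\<Sum>a<d. A a a) = (\<Sum>a<d. \<Sum>j<d. complex_of_real (t j) * (e j a * cnj (e j a)))"
    using entry_eig by (intro sum.cong) (auto simp: mult.assoc)
  also have "\<dots> = (\<Sum>j<d. \<Sum>a<d. complex_of_real (t j) * (e j a * cnj (e j a)))" by (rule sum.swap)
  also have "\<dots> = (\<Sum>j<d. complex_of_real (t j) * (\<Sum>a<d. cnj (e j a) * e j a))"
    by (simp add: sum_distrib_left mult.commute)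
  also have "\<dots> = (\<Sum>j<d. complex_of_real (t j))"
    using on unfolding orthonormal_def cip_def by simp
  finally show ?thesis by simp
qed

end

lemma lin_prod_inj:
  fixes M N :: "complex multiset"
  shows "(\<Prod>a\<in>#M. [:-a, 1:]) = (\<Prod>a\<in>#N. [:-a, 1:]) \<Longrightarrow> M = N"
proof (induction M arbitrary: N)
  case empty
  show ?case
  proof (rule ccontr)
    assume "{#} \<noteq> N"
    then obtain b where b: "b \<in># N" by (metis multiset_nonemptyE)
    have "poly (\<Prod>a\<in>#N. [:-a, 1:]) b = (\<Prod>a\<in>#N. poly [:-a, 1:] b)" by (rule poly_prod_mset)
    also have "\<dots> = 0" using b by (auto simp: prod_mset_zero_iff)
    finally show False using empty.prems by simp
  qed
next
  case (add a M)
  have "poly (\<Prod>x\<in>#N. [:-x, 1:]) a = poly (\<Prod>x\<in>#add_mset a M. [:-x, 1:]) a" using add.prems by simp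
  also have "\<dots> = 0" by simp
  finally have "(\<Prod>x\<in>#N. poly [:-x, 1:] a) = 0" by (simp add: poly_prod_mset)
  then obtain b where b: "b \<in># N" "poly [:-b, 1:] a = 0" by (auto simp: prod_mset_zero_iff)
  hence ab: "a \<in># N" by simp
  define N' where "N' = N - {#a#}"
  have N: "N = add_mset a N'" unfolding N'_def using ab by simp
  have "[:-a, 1:] * (\<Prod>x\<in>#M. [:-x, 1:]) = [:-a, 1:] * (\<Prod>x\<in>#N'. [:-x, 1:])"
    using add.prems unfolding N by simp
  moreover have nz: "[:-a, 1::complex:] \<noteq> 0" by simp
  ultimately have "(\<Prod>x\<in>#M. [:-x, 1:]) = (\<Prod>x\<in>#N'. [:-x, 1:])" by (simp only: mult_left_cancel[OF nz])
  hence "M = N'" by (rule add.IH)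
  thus ?case using N by simp
qed

lemma lin_prod_list_inj:
  fixes as bs :: "complex list"
  assumes "(\<Prod>a\<leftarrow>as. [:-a, 1:]) = (\<Prod>a\<leftarrow>bs. [:-a, 1:])"
  shows "mset as = mset bs"
proof -
  have "(\<Prod>a\<in>#mset as. [:-a, 1:]) = prod_mset (mset (map (\<lambda>a. [:-a, 1:]) as))" by simp
  also have "\<dots> = (\<Prod>a\<leftarrow>as. [:-a, 1:])" by (rule prod_mset_prod_list)
  also have "\<dots> = (\<Prod>a\<leftarrow>bs. [:-a, 1:])" by (rule assms)
  also have "\<dots> = prod_mset (mset (map (\<lambda>a. [:-a, 1:]) bs))" by (rule prod_mset_prod_list[symmetric])
  also have "\<dots> = (\<Prod>a\<in>#mset bs. [:-a, 1:])" by simp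
  finally have "(\<Prod>a\<in>#mset as. [:-a, 1:]) = (\<Prod>a\<in>#mset bs. [:-a, 1:])" .
  thus ?thesis by (rule lin_prod_inj)
qed

lemma sum_list_mset_eq: fixes f :: "complex \<Rightarrow> real" assumes "mset as = mset bs" shows "(\<Sum>a\<leftarrow>as. f a) = (\<Sum>a\<leftarrow>bs. f a)"
proof -
  have "mset (map f as) = mset (map f bs)" using assms by simp
  hence "sum_mset (mset (map f as)) = sum_mset (mset (map f bs))" by simp
  thus ?thesis by (simp only: sum_mset_sum_list)
qed

lemma trace_norm_eq:
  assumes "\<exists>as. char_poly (mat_adjoint A * A) = (\<Prod>a\<leftarrow>as. [:- a, 1:]) \<and> s = (\<Sum>a\<leftarrow>as. sqrt (cmod a))"
  shows "trace_norm A = s"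
proof -
  obtain as where as: "char_poly (mat_adjoint A * A) = (\<Prod>a\<leftarrow>as. [:- a, 1:])" "s = (\<Sum>a\<leftarrow>as. sqrt (cmod a))"
    using assms by blast
  have uniq: "\<exists>bs. char_poly (mat_adjoint A * A) = (\<Prod>a\<leftarrow>bs. [:- a, 1:]) \<and> r = (\<Sum>a\<leftarrow>bs. sqrt (cmod a))
        \<Longrightarrow> r = s" for r
  proof -
    assume "\<exists>bs. char_poly (mat_adjoint A * A) = (\<Prod>a\<leftarrow>bs. [:- a, 1:]) \<and> r = (\<Sum>a\<leftarrow>bs. sqrt (cmod a))"
    then obtain bs where bs: "char_poly (mat_adjoint A * A) = (\<Prod>a\<leftarrow>bs. [:- a, 1:])" "r = (\<Sum>a\<leftarrow>bs. sqrt (cmod a))" by blast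
    have "mset bs = mset as" using lin_prod_list_inj as(1) bs(1) by metis
    thus "r = s" using bs(2) as(2) sum_list_mset_eq by metis
  qed
  have ex: "\<exists>r. \<exists>bs. char_poly (mat_adjoint A * A) = (\<Prod>a\<leftarrow>bs. [:- a, 1:]) \<and> r = (\<Sum>a\<leftarrow>bs. sqrt (cmod a))"
    using assms by blast
  show ?thesis unfolding trace_norm_def by (rule someI2_ex[OF ex]) (rule uniq)
qed

lemma (in eigsys) col_eig:
  assumes h: "herm d A" and jb: "j < d" "b < d"
  shows "cip d (e j) (\<lambda>c. A c b) = complex_of_real (t j) * cnj (e j b)"
proof -
  have "cip d (e j) (\<lambda>c. A c b) = cip d (e j) (mv d A (\<lambda>c. if c = b then 1 else 0))"
    using jb unfolding mv_def by (intro cip_cong) (auto simp: if_distrib sum.delta cong: if_cong)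
  also have "\<dots> = cip d (mv d A (e j)) (\<lambda>c. if c = b then 1 else 0)" by (rule herm_mv_sym[OF h])
  also have "\<dots> = cip d (\<lambda>c. complex_of_real (t j) * e j c) (\<lambda>c. if c = b then 1 else 0)"
    using ev jb by (intro cip_cong) auto
  also have "\<dots> = complex_of_real (t j) * cnj (e j b)"
    using jb by (simp only: cip_scale_left cip_delta) simp
  finally show ?thesis .
qed

lemma (in eigsys) sq_entry:
  assumes h: "herm d A" and ab: "a < d" "b < d"
  shows "(\<Sum>c<d. A a c * A c b) = (\<Sum>j<d. complex_of_real ((t j)^2) * e j a * cnj (e j b))"
proof -
  have "(\<Sum>c<d. A a c * A c b) = mv d A (\<lambda>c. A c b) a" unfolding mv_def ..
  also have "\<dots> = (\<Sum>j<d. complex_of_real (t j) * cip d (e j) (\<lambda>c. A c b) * e j a)"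
    by (rule mv_eig[OF ab(1)])
  also have "\<dots> = (\<Sum>j<d. complex_of_real ((t j)^2) * e j a * cnj (e j b))"
    using col_eig[OF h _ ab(2)] by (intro sum.cong refl) (simp add: power2_eq_square)
  finally show ?thesis .
qed

lemma trace_norm_herm:
  assumes A: "A \<in> carrier_mat d d" and h: "herm d (\<lambda>a b. A $$ (a,b))"
    and es: "eigsys d (\<lambda>a b. A $$ (a,b)) e t"
  shows "trace_norm A = (\<Sum>j<d. \<bar>t j\<bar>)"
proof -
  interpret eigsys d "\<lambda>a b. A $$ (a,b)" e t by (rule es)
  define U where "U = mat d d (\<lambda>(a,j). e j a)"
  define Ua where "Ua = mat d d (\<lambda>(j,b). cnj (e j b))"
  define D2 where "D2 = mat d d (\<lambda>(i,j). if i = j then complex_of_real ((t i)^2) else 0)"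
  have U: "U \<in> carrier_mat d d" and Ua: "Ua \<in> carrier_mat d d" and D2: "D2 \<in> carrier_mat d d"
    unfolding U_def Ua_def D2_def by auto
  have UUa: "U * Ua = 1\<^sub>m d"
  proof (rule eq_matI)
    fix a b assume ab: "a < dim_row (1\<^sub>m d)" "b < dim_col (1\<^sub>m d)"
    have "(U * Ua) $$ (a,b) = (\<Sum>j<d. e j a * cnj (e j b))"
      using ab by (simp add: scalar_prod_def U_def Ua_def atLeast0LessThan)
    also have "\<dots> = 1\<^sub>m d $$ (a,b)" using completeness[OF on] ab by simp
    finally show "(U * Ua) $$ (a,b) = 1\<^sub>m d $$ (a,b)" .
  qed (auto simp: U_def Ua_def)
  have UaU: "Ua * U = 1\<^sub>m d"
  proof (rule eq_matI)
    fix i j assume ij: "i < dim_row (1\<^sub>m d)" "j < dim_col (1\<^sub>m d)"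
    have "(Ua * U) $$ (i,j) = cip d (e i) (e j)"
      using ij by (simp add: scalar_prod_def U_def Ua_def atLeast0LessThan cip_def)
    also have "\<dots> = 1\<^sub>m d $$ (i,j)" using on ij unfolding orthonormal_def by simp
    finally show "(Ua * U) $$ (i,j) = 1\<^sub>m d $$ (i,j)" .
  qed (auto simp: U_def Ua_def)
  have adjA: "mat_adjoint A = A"
  proof -
    have "mat_adjoint A = mat d d (\<lambda>(i,j). cnj (A $$ (j,i)))" by (rule adj_idx[OF A])
    also have "\<dots> = A"
    proof (rule eq_matI)
      fix i j assume "i < dim_row A" "j < dim_col A"
      hence ij: "i < d" "j < d" using A by auto
      have "A $$ (j,i) = cnj (A $$ (i,j))" using h[unfolded herm_def, rule_format, OF ij] .
      thus "mat d d (\<lambda>(i,j). cnj (A $$ (j,i))) $$ (i,j) = A $$ (i,j)" using ij by simp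
    qed (use A in auto)
    finally show ?thesis .
  qed
  have AA: "mat_adjoint A * A = U * D2 * Ua"
  proof (rule eq_matI)
    fix a b assume ab: "a < dim_row (U * D2 * Ua)" "b < dim_col (U * D2 * Ua)"
    hence ab': "a < d" "b < d" using U Ua D2 by auto
    have UD: "(U * D2) $$ (a,j) = e j a * complex_of_real ((t j)^2)" if "j < d" for j
    proof -
      have "(U * D2) $$ (a,j) = (\<Sum>i\<in>{0..<d}. e i a * (if i = j then complex_of_real ((t i)^2) else 0))"
        using ab' that by (simp add: scalar_prod_def U_def D2_def)
      also have "\<dots> = e j a * complex_of_real ((t j)^2)"
        using that by (simp add: if_distrib sum.delta cong: if_cong)
      finally show ?thesis .
    qed
    have "(U * D2 * Ua) $$ (a,b) = (\<Sum>j\<in>{0..<d}. (U * D2) $$ (a,j) * cnj (e j b))"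
      using ab' U D2 by (simp add: scalar_prod_def Ua_def)
    also have "\<dots> = (\<Sum>j<d. complex_of_real ((t j)^2) * e j a * cnj (e j b))"
      using UD by (auto simp: atLeast0LessThan intro!: sum.cong)
    also have "\<dots> = (\<Sum>c<d. A $$ (a,c) * A $$ (c,b))" using sq_entry[OF h ab'] by simp
    also have "\<dots> = (mat_adjoint A * A) $$ (a,b)"
      unfolding adjA using A ab' by (simp add: scalar_prod_def atLeast0LessThan)
    finally show "(mat_adjoint A * A) $$ (a,b) = (U * D2 * Ua) $$ (a,b)" by simp
  qed (use A U Ua D2 adj_idx[OF A] in auto)
  have AAc: "mat_adjoint A * A \<in> carrier_mat d d" using adjA A by simp
  have "similar_mat (mat_adjoint A * A) D2"
    by (rule similar_matI[of _ _ _ _ d, OF _ UUa UaU AA]) (use AAc D2 U Ua in auto)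
  hence "char_poly (mat_adjoint A * A) = char_poly D2" by (rule char_poly_similar)
  also have "\<dots> = (\<Prod>a\<leftarrow>diag_mat D2. [:- a, 1:])"
    by (rule char_poly_upper_triangular[OF D2]) (auto simp: upper_triangular_def D2_def)
  finally have cp: "char_poly (mat_adjoint A * A) = (\<Prod>a\<leftarrow>diag_mat D2. [:- a, 1:])" .
  have "(\<Sum>a\<leftarrow>diag_mat D2. sqrt (cmod a)) = (\<Sum>i\<leftarrow>[0..<d]. \<bar>t i\<bar>)"
  proof -
    have "map (\<lambda>i. sqrt (cmod (D2 $$ (i,i)))) [0..<d] = map (\<lambda>i. \<bar>t i\<bar>) [0..<d]"
      by (intro map_cong refl) (auto simp: D2_def norm_power simp del: of_real_power)
    note mapeq = this
    have dm: "diag_mat D2 = map (\<lambda>i. D2 $$ (i,i)) [0..<d]" unfolding diag_mat_def using D2 by simp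
    have "(\<Sum>a\<leftarrow>diag_mat D2. sqrt (cmod a)) = sum_list (map (\<lambda>i. sqrt (cmod (D2 $$ (i,i)))) [0..<d])"
      by (simp add: dm o_def)
    also have "\<dots> = sum_list (map (\<lambda>i. \<bar>t i\<bar>) [0..<d])" by (rule arg_cong[where f=sum_list]) (rule mapeq)
    finally show ?thesis .
  qed
  also have "\<dots> = (\<Sum>j<d. \<bar>t j\<bar>)"
    by (simp add: sum_set_upt_conv_sum_list_nat[symmetric] atLeast0LessThan)
  finally show ?thesis using cp by (intro trace_norm_eq) auto
qed

lemma orth_facts:
  assumes on: "orthonormal d d e" and ij: "i < d" "j < d"
  shows "cip d (e i) (e j) = (if i = j then 1 else 0)"
  using on ij unfolding orthonormal_def by auto

lemma mv_lin2: "mv d A (\<lambda>b. c1 * x b + c2 * y b) a = c1 * mv d A x a + c2 * mv d A y a"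
  unfolding mv_def by (simp add: sum.distrib sum_distrib_left algebra_simps)

lemma tn_char:
  assumes D: "D \<in> carrier_mat d d" and h: "herm d (\<lambda>a b. D $$ (a,b))" and d0: "0 < d"
    and tr: "(\<Sum>a<d. D $$ (a,a)) = 0"
    and np: "\<And>x. cip d x \<psi> = 0 \<Longrightarrow> Re (qf d (\<lambda>a b. D $$ (a,b)) x) \<le> 0"
  shows "\<exists>x0. nrm2 d x0 = 1 \<and> trace_norm D / 2 = Re (qf d (\<lambda>a b. D $$ (a,b)) x0)
           \<and> (\<forall>x. nrm2 d x = 1 \<longrightarrow> Re (qf d (\<lambda>a b. D $$ (a,b)) x) \<le> trace_norm D / 2)"
proof -
  define Df where "Df = (\<lambda>a b. D $$ (a,b))"
  obtain e t where on: "orthonormal d d e" and ev: "\<forall>j<d. \<forall>a<d. mv d Df (e j) a = complex_of_real (t j) * e j a"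
    using spectral[OF h[folded Df_def]] by blast
  have es: "eigsys d Df e t" using on ev by unfold_locales auto
  interpret eigsys d Df e t by (rule es)
  have tn: "trace_norm D = (\<Sum>j<d. \<bar>t j\<bar>)" using trace_norm_herm[OF D h es[unfolded Df_def]] .
  have st: "(\<Sum>j<d. t j) = 0" using trace_eig tr unfolding Df_def by (metis of_real_eq_0_iff)
  obtain j0 where j0: "j0 < d" "\<And>j. j < d \<Longrightarrow> t j \<le> t j0"
  proof -
    have "Max (t ` {..<d}) \<in> t ` {..<d}" using d0 by (intro Max_in) auto
    then obtain j0 where "j0 < d" "t j0 = Max (t ` {..<d})" by auto
    thus ?thesis using that[of j0] by auto
  qed
  have qe: "qf d Df (e j) = complex_of_real (t j)" if "j < d" for j
  proof -
    have "qf d Df (e j) = cip d (e j) (\<lambda>a. complex_of_real (t j) * e j a)"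
      unfolding qf_def using ev that by (intro cip_cong) auto
    also have "\<dots> = complex_of_real (t j)" using orth_facts[OF on that that] by (simp add: cip_scale_right)
    finally show ?thesis .
  qed
  have two: False if ij: "i < d" "j < d" "i \<noteq> j" "t i > 0" "t j > 0" for i j
  proof (cases "cip d (e j) \<psi> = 0")
    case True
    hence "Re (qf d Df (e j)) \<le> 0" using np unfolding Df_def by auto
    thus False using qe[OF ij(2)] ij by simp
  next
    case False
    define \<alpha> where "\<alpha> = cnj (cip d (e j) \<psi>)"
    define \<beta> where "\<beta> = - cnj (cip d (e i) \<psi>)"
    define x where "x = (\<lambda>a. \<alpha> * e i a + \<beta> * e j a)"
    have "cip d x \<psi> = cnj \<alpha> * cip d (e i) \<psi> + cnj \<beta> * cip d (e j) \<psi>"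
      unfolding x_def by (simp add: cip_add_left cip_scale_left)
    also have "\<dots> = 0" unfolding \<alpha>_def \<beta>_def by simp
    finally have "Re (qf d Df x) \<le> 0" using np unfolding Df_def by auto
    moreover have "qf d Df x = complex_of_real ((cmod \<alpha>)^2 * t i + (cmod \<beta>)^2 * t j)"
    proof -
      have "qf d Df x = cip d x (\<lambda>a. \<alpha> * (complex_of_real (t i) * e i a) + \<beta> * (complex_of_real (t j) * e j a))"
        unfolding qf_def x_def using ev ij by (intro cip_cong refl) (subst mv_lin2, simp)
      also have "\<dots> = cnj \<alpha> * \<alpha> * complex_of_real (t i) + cnj \<beta> * \<beta> * complex_of_real (t j)"
        unfolding x_def using orth_facts[OF on] ij
        by (simp add: cip_add_left cip_add_right cip_scale_left cip_scale_right algebra_simps)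
      finally show ?thesis by (simp add: cnj_mult_self)
    qed
    moreover have "\<alpha> \<noteq> 0" unfolding \<alpha>_def using False by simp
    hence "(cmod \<alpha>)^2 * t i > 0" using ij by simp
    moreover have "(cmod \<beta>)^2 * t j \<ge> 0" using ij by simp
    ultimately show False by simp
  qed
  have t0: "t j0 \<ge> 0"
  proof (rule ccontr)
    assume "\<not> t j0 \<ge> 0"
    hence a1: "\<forall>j\<in>{..<d}. t j \<le> 0" using j0 by force
    have a2: "\<exists>j\<in>{..<d}. t j < 0" using j0 \<open>\<not> t j0 \<ge> 0\<close> by force
    have "(\<Sum>j<d. t j) < (\<Sum>j<d. 0)" by (rule sum_strict_mono_ex1[OF finite_lessThan a1 a2])
    thus False using st by simp
  qed
  have neg: "t j \<le> 0" if "j < d" "j \<noteq> j0" for j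
    using two[of j j0] j0 that by force
  have "(\<Sum>j<d. \<bar>t j\<bar>) = \<bar>t j0\<bar> + (\<Sum>j\<in>{..<d} - {j0}. \<bar>t j\<bar>)"
    using j0 by (simp add: sum.remove)
  also have "(\<Sum>j\<in>{..<d} - {j0}. \<bar>t j\<bar>) = - (\<Sum>j\<in>{..<d} - {j0}. t j)"
    using neg by (auto simp: sum_negf[symmetric] intro!: sum.cong)
  also have "(\<Sum>j\<in>{..<d} - {j0}. t j) = (\<Sum>j<d. t j) - t j0"
    using j0 by (simp add: sum_diff1)
  finally have tn2: "trace_norm D / 2 = t j0" using tn st t0 by simp
  have "nrm2 d (e j0) = 1" using orth_facts[OF on j0(1) j0(1)] cip_self[of d "e j0"] by simp
  moreover have "trace_norm D / 2 = Re (qf d Df (e j0))" using tn2 qe[OF j0(1)] by simp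
  moreover have "Re (qf d Df x) \<le> trace_norm D / 2" if "nrm2 d x = 1" for x
  proof -
    have "Re (qf d Df x) = (\<Sum>j<d. t j * (cmod (cip d (e j) x))^2)" using qf_eig by simp
    also have "\<dots> \<le> (\<Sum>j<d. t j0 * (cmod (cip d (e j) x))^2)"
      using j0 by (intro sum_mono mult_right_mono) auto
    also have "\<dots> = t j0 * nrm2 d x" using nrm2_eig by (simp add: sum_distrib_left)
    finally show ?thesis using that tn2 by simp
  qed
  ultimately show ?thesis unfolding Df_def by blast
qed

definition tk :: "nat \<Rightarrow> nat \<Rightarrow> (nat \<Rightarrow> real) \<Rightarrow> real" where
  "tk d k y = Max ((\<lambda>S. \<Sum>i\<in>S. (y i)^2) ` {S. S \<subseteq> {..<d} \<and> card S \<le> k})"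

lemma tk_fin: "finite {S. S \<subseteq> {..<d::nat} \<and> card S \<le> k}"
  by (rule finite_subset[of _ "Pow {..<d}"]) auto

lemma tk_ge: "S \<subseteq> {..<d} \<Longrightarrow> card S \<le> k \<Longrightarrow> (\<Sum>i\<in>S. (y i)^2) \<le> tk d k y"
  unfolding tk_def by (rule Max_ge) (use tk_fin in auto)

lemma tk_attained: "\<exists>S. S \<subseteq> {..<d} \<and> card S \<le> k \<and> tk d k y = (\<Sum>i\<in>S. (y i)^2)"
proof -
  have "tk d k y \<in> (\<lambda>S. \<Sum>i\<in>S. (y i)^2) ` {S. S \<subseteq> {..<d} \<and> card S \<le> k}"
    unfolding tk_def by (rule Max_in) (use tk_fin in auto)
  thus ?thesis by auto
qed

lemma tk_nonneg: "tk d k y \<ge> 0"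
  using tk_ge[of "{}" d k y] by simp

lemma tk_le_sum: "tk d k y \<le> (\<Sum>i<d. (y i)^2)"
proof -
  obtain S where S: "S \<subseteq> {..<d}" "tk d k y = (\<Sum>i\<in>S. (y i)^2)" using tk_attained by blast
  thus ?thesis by (auto intro: sum_mono2)
qed

lemma tk_cong: "(\<And>i. i < d \<Longrightarrow> (y i)^2 = (z i)^2) \<Longrightarrow> tk d k y = tk d k z"
proof -
  assume h: "\<And>i. i < d \<Longrightarrow> (y i)^2 = (z i)^2"
  have "(\<lambda>S. \<Sum>i\<in>S. (y i)^2) ` {S. S \<subseteq> {..<d} \<and> card S \<le> k} = (\<lambda>S. \<Sum>i\<in>S. (z i)^2) ` {S. S \<subseteq> {..<d} \<and> card S \<le> k}"
    using h by (intro image_cong refl sum.cong) auto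
  thus ?thesis unfolding tk_def by simp
qed

lemma tk_abs: "tk d k (\<lambda>i. \<bar>y i\<bar>) = tk d k y"
  by (rule tk_cong) simp

lemma tk_lip: "tk d k y \<le> tk d k z + (\<Sum>i<d. \<bar>(y i)^2 - (z i)^2\<bar>)"
proof -
  obtain S where S: "S \<subseteq> {..<d}" "card S \<le> k" "tk d k y = (\<Sum>i\<in>S. (y i)^2)" using tk_attained by blast
  have "(\<Sum>i\<in>S. (y i)^2) = (\<Sum>i\<in>S. (z i)^2) + (\<Sum>i\<in>S. (y i)^2 - (z i)^2)" by (simp add: sum_subtractf)
  also have "(\<Sum>i\<in>S. (y i)^2 - (z i)^2) \<le> (\<Sum>i\<in>S. \<bar>(y i)^2 - (z i)^2\<bar>)" by (intro sum_mono) auto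
  also have "\<dots> \<le> (\<Sum>i<d. \<bar>(y i)^2 - (z i)^2\<bar>)" using S by (intro sum_mono2) auto
  finally show ?thesis using S tk_ge[OF S(1,2), of z] by linarith
qed

lemma tk_scale: "tk d k (\<lambda>i. c * y i) = c^2 * tk d k y"
proof (rule antisym)
  obtain S where S: "S \<subseteq> {..<d}" "card S \<le> k" "tk d k (\<lambda>i. c * y i) = (\<Sum>i\<in>S. (c * y i)^2)" using tk_attained by blast
  have "(\<Sum>i\<in>S. (c * y i)^2) = c^2 * (\<Sum>i\<in>S. (y i)^2)" by (simp add: sum_distrib_left power_mult_distrib)
  also have "\<dots> \<le> c^2 * tk d k y" using tk_ge[OF S(1,2)] by (intro mult_left_mono) auto
  finally show "tk d k (\<lambda>i. c * y i) \<le> c^2 * tk d k y" using S by simp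
next
  obtain S where S: "S \<subseteq> {..<d}" "card S \<le> k" "tk d k y = (\<Sum>i\<in>S. (y i)^2)" using tk_attained by blast
  have "c^2 * tk d k y = (\<Sum>i\<in>S. (c * y i)^2)" using S by (simp add: sum_distrib_left power_mult_distrib)
  also have "\<dots> \<le> tk d k (\<lambda>i. c * y i)" by (rule tk_ge[OF S(1,2)])
  finally show "c^2 * tk d k y \<le> tk d k (\<lambda>i. c * y i)" .
qed

lemma tk_perm:
  assumes bij: "bij_betw \<pi> {..<d} {..<d}"
  shows "tk d k (\<lambda>i. y (\<pi> i)) = tk d k y"
proof (rule antisym)
  obtain S where S: "S \<subseteq> {..<d}" "card S \<le> k" "tk d k (\<lambda>i. y (\<pi> i)) = (\<Sum>i\<in>S. (y (\<pi> i))^2)" using tk_attained by blast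
  have inj: "inj_on \<pi> S" using bij S(1) by (meson bij_betw_def inj_on_subset)
  have "(\<Sum>i\<in>S. (y (\<pi> i))^2) = (\<Sum>j\<in>\<pi> ` S. (y j)^2)" by (simp add: sum.reindex[OF inj])
  also have "\<dots> \<le> tk d k y"
    using S bij inj by (intro tk_ge) (auto simp: card_image bij_betw_def)
  finally show "tk d k (\<lambda>i. y (\<pi> i)) \<le> tk d k y" using S by simp
next
  obtain S where S: "S \<subseteq> {..<d}" "card S \<le> k" "tk d k y = (\<Sum>i\<in>S. (y i)^2)" using tk_attained by blast
  define T where "T = {i\<in>{..<d}. \<pi> i \<in> S}"
  have "T \<subseteq> {..<d}" unfolding T_def by auto
  hence inj: "inj_on \<pi> T" using bij unfolding bij_betw_def by (blast intro: inj_on_subset)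
  have img: "\<pi> ` T = S" using bij S(1) unfolding T_def bij_betw_def by auto
  have "tk d k y = (\<Sum>j\<in>\<pi> ` T. (y j)^2)" using S img by simp
  also have "\<dots> = (\<Sum>i\<in>T. (y (\<pi> i))^2)" by (simp add: sum.reindex[OF inj])
  also have "\<dots> \<le> tk d k (\<lambda>i. y (\<pi> i))"
    using S img card_image[OF inj] by (intro tk_ge) (auto simp: T_def)
  finally show "tk d k y \<le> tk d k (\<lambda>i. y (\<pi> i))" .
qed

lemma exchange:
  fixes w :: "nat \<Rightarrow> real"
  assumes anti: "\<And>i j. i \<le> j \<Longrightarrow> j < d \<Longrightarrow> w j \<le> w i" and nn: "\<And>i. w i \<ge> 0"
    and T: "T \<subseteq> {..<d}" "card T \<le> k" and kd: "k \<le> d"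
  shows "(\<Sum>i\<in>T. w i) \<le> (\<Sum>i<k. w i)"
proof (cases "k = 0")
  case True
  hence "T = {}" using T finite_subset[OF T(1)] by auto
  thus ?thesis using True by simp
next
  case False
  define c where "c = w (k - 1)"
  define A where "A = T - {..<k}"
  define B where "B = {..<k} - T"
  have finT: "finite T" using T(1) finite_subset by blast
  have sT: "(\<Sum>i\<in>T. w i) = (\<Sum>i\<in>T \<inter> {..<k}. w i) + (\<Sum>i\<in>A. w i)"
    unfolding A_def using finT by (metis Diff_eq sum.Int_Diff)
  have sK: "(\<Sum>i<k. w i) = (\<Sum>i\<in>T \<inter> {..<k}. w i) + (\<Sum>i\<in>B. w i)"
    unfolding B_def by (metis Diff_eq finite_lessThan inf.commute sum.Int_Diff)
  have cT: "card T = card (T \<inter> {..<k}) + card A"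
    unfolding A_def using finT by (metis Diff_eq card_Int_Diff)
  have cK: "k = card (T \<inter> {..<k}) + card B"
    unfolding B_def by (metis Diff_eq card_Int_Diff card_lessThan finite_lessThan inf.commute)
  have cAB: "card A \<le> card B" using cT cK T(2) by linarith
  have "(\<Sum>i\<in>A. w i) \<le> (\<Sum>i\<in>A. c)"
  proof (intro sum_mono)
    fix i assume "i \<in> A"
    hence "k - 1 \<le> i" "i < d" using T(1) unfolding A_def by auto
    thus "w i \<le> c" unfolding c_def by (rule anti)
  qed
  also have "\<dots> = real (card A) * c" by simp
  also have "\<dots> \<le> real (card B) * c" using cAB nn[of "k-1"] unfolding c_def by (intro mult_right_mono) auto
  also have "\<dots> = (\<Sum>i\<in>B. c)" by simp
  also have "\<dots> \<le> (\<Sum>i\<in>B. w i)"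
  proof (intro sum_mono)
    fix i assume "i \<in> B"
    hence "i \<le> k - 1" "k - 1 < d" using kd False unfolding B_def by auto
    thus "c \<le> w i" unfolding c_def by (rule anti)
  qed
  finally show ?thesis using sT sK by linarith
qed

lemma tk_sorted:
  assumes anti: "\<And>i j. i \<le> j \<Longrightarrow> j < d \<Longrightarrow> \<bar>y j\<bar> \<le> \<bar>y i\<bar>" and kd: "k \<le> d"
  shows "tk d k y = (\<Sum>i<k. (y i)^2)"
proof (rule antisym)
  obtain S where S: "S \<subseteq> {..<d}" "card S \<le> k" "tk d k y = (\<Sum>i\<in>S. (y i)^2)" using tk_attained by blast
  have "(\<Sum>i\<in>S. (y i)^2) \<le> (\<Sum>i<k. (y i)^2)"
  proof (rule exchange[OF _ _ S(1,2) kd])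
    fix i j :: nat assume "i \<le> j" "j < d"
    hence "\<bar>y j\<bar> \<le> \<bar>y i\<bar>" by (rule anti)
    thus "(y j)^2 \<le> (y i)^2" by (metis abs_ge_zero power2_abs power_mono)
  qed auto
  thus "tk d k y \<le> (\<Sum>i<k. (y i)^2)" using S by simp
next
  show "(\<Sum>i<k. (y i)^2) \<le> tk d k y" using kd by (intro tk_ge) auto
qed

lemma rev_sort_desc:
  fixes xs :: "real list"
  assumes "i \<le> j" "j < length xs"
  shows "rev (sort xs) ! j \<le> rev (sort xs) ! i"
proof -
  have "rev (sort xs) ! j = sort xs ! (length xs - Suc j)" using assms by (simp add: rev_nth)
  also have "\<dots> \<le> sort xs ! (length xs - Suc i)"
    using assms by (intro sorted_nth_mono) auto
  also have "\<dots> = rev (sort xs) ! i" using assms by (simp add: rev_nth)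
  finally show ?thesis .
qed

lemma topk_tk:
  assumes m: "m \<in> carrier_vec d" and kd: "k \<le> d"
  shows "(topk_norm k m)^2 = tk d k (\<lambda>i. m $ i)"
proof -
  define s where "s = rev (sort (map abs (list_of_vec m)))"
  have len: "length s = d" using m unfolding s_def by simp
  have "mset s = mset (map abs (list_of_vec m))" unfolding s_def by simp
  then obtain f where f: "bij_betw f {..<length s} {..<length (map abs (list_of_vec m))}"
      "\<forall>i<length s. s ! i = map abs (list_of_vec m) ! f i"
    using permutation_Ex_bij by blast
  have fb: "bij_betw f {..<d} {..<d}" using f(1) len m by simp
  have fi: "s ! i = \<bar>m $ f i\<bar>" if "i < d" for i
  proof -
    have "f i < d" using fb that unfolding bij_betw_def by auto
    thus ?thesis using f(2) that len m by simp
  qed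
  have "tk d k (\<lambda>i. m $ i) = tk d k (\<lambda>i. m $ f i)" by (rule tk_perm[OF fb, symmetric])
  also have "\<dots> = tk d k (\<lambda>i. s ! i)" using fi by (intro tk_cong) simp
  also have "\<dots> = (\<Sum>i<k. (s ! i)^2)"
  proof (rule tk_sorted[OF _ kd])
    fix i j assume "i \<le> j" "j < d"
    hence "s ! j \<le> s ! i" unfolding s_def using len[unfolded s_def] by (intro rev_sort_desc) auto
    moreover have "s ! j \<ge> 0" using fi \<open>j < d\<close> by simp
    ultimately show "\<bar>s ! j\<bar> \<le> \<bar>s ! i\<bar>" by simp
  qed
  finally have "tk d k (\<lambda>i. m $ i) = (\<Sum>i<k. (s ! i)^2)" .
  moreover have "(topk_norm k m)^2 = (\<Sum>i<k. (s ! i)^2)"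
    unfolding topk_norm_def s_def by (simp add: sum_nonneg)
  ultimately show ?thesis by simp
qed

lemma vdown_len: "v \<in> carrier_vec d \<Longrightarrow> length (vdown v) = d"
  unfolding vdown_def by simp

lemma vdown_perm1:
  assumes v: "v \<in> carrier_vec d"
  shows "\<exists>g. bij_betw g {..<d} {..<d} \<and> (\<forall>i<d. vdown v ! i = cmod (v $ g i))"
proof -
  have "mset (vdown v) = mset (map cmod (list_of_vec v))" unfolding vdown_def by simp
  then obtain f where f: "bij_betw f {..<length (vdown v)} {..<length (map cmod (list_of_vec v))}"
      "\<forall>i<length (vdown v). vdown v ! i = map cmod (list_of_vec v) ! f i"
    using permutation_Ex_bij by blast
  have fb: "bij_betw f {..<d} {..<d}" using f(1) vdown_len[OF v] v by simp
  have "vdown v ! i = cmod (v $ f i)" if "i < d" for i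
  proof -
    have "f i < d" using fb that unfolding bij_betw_def by auto
    thus ?thesis using f(2) that vdown_len[OF v] v by simp
  qed
  thus ?thesis using fb by blast
qed

lemma vdown_perm2:
  assumes v: "v \<in> carrier_vec d"
  shows "\<exists>h. bij_betw h {..<d} {..<d} \<and> (\<forall>i<d. cmod (v $ i) = vdown v ! h i)"
proof -
  have "mset (map cmod (list_of_vec v)) = mset (vdown v)" unfolding vdown_def by simp
  then obtain f where f: "bij_betw f {..<length (map cmod (list_of_vec v))} {..<length (vdown v)}"
      "\<forall>i<length (map cmod (list_of_vec v)). map cmod (list_of_vec v) ! i = vdown v ! f i"
    using permutation_Ex_bij by blast
  have fb: "bij_betw f {..<d} {..<d}" using f(1) vdown_len[OF v] v by simp
  have "cmod (v $ i) = vdown v ! f i" if "i < d" for i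
    using f(2) that v by simp
  thus ?thesis using fb by blast
qed

lemma vdown_nonneg: "v \<in> carrier_vec d \<Longrightarrow> i < d \<Longrightarrow> vdown v ! i \<ge> 0"
  using vdown_perm1[of v d] by auto

lemma cs_real:
  fixes f g :: "'a \<Rightarrow> real"
  shows "(\<Sum>i\<in>A. f i * g i)^2 \<le> (\<Sum>i\<in>A. (f i)^2) * (\<Sum>i\<in>A. (g i)^2)"
proof -
  have "0 \<le> (\<Sum>i\<in>A. \<Sum>j\<in>A. (f i * g j - f j * g i)^2)" by (simp add: sum_nonneg)
  also have "\<dots> = (\<Sum>i\<in>A. \<Sum>j\<in>A. (f i)^2 * (g j)^2 + (g i)^2 * (f j)^2 - 2 * ((f i * g i) * (f j * g j)))"
    by (intro sum.cong refl) (simp add: power2_eq_square algebra_simps)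
  also have "\<dots> = (\<Sum>i\<in>A. \<Sum>j\<in>A. (f i)^2 * (g j)^2) + (\<Sum>i\<in>A. \<Sum>j\<in>A. (g i)^2 * (f j)^2)
       - 2 * (\<Sum>i\<in>A. \<Sum>j\<in>A. (f i * g i) * (f j * g j))"
    by (simp add: sum.distrib sum_subtractf sum_distrib_left)
  also have "\<dots> = 2 * ((\<Sum>i\<in>A. (f i)^2) * (\<Sum>i\<in>A. (g i)^2)) - 2 * (\<Sum>i\<in>A. f i * g i)^2"
    by (simp add: sum_product[symmetric] power2_eq_square)
  finally show ?thesis by simp
qed

lemma cs_complex:
  fixes x u :: "nat \<Rightarrow> complex"
  shows "(cmod (\<Sum>a\<in>S. cnj (x a) * u a))^2 \<le> (\<Sum>a\<in>S. (cmod (x a))^2) * (\<Sum>a\<in>S. (cmod (u a))^2)"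
proof -
  have "cmod (\<Sum>a\<in>S. cnj (x a) * u a) \<le> (\<Sum>a\<in>S. cmod (x a) * cmod (u a))"
    by (rule order_trans[OF norm_sum]) (simp add: norm_mult)
  hence "(cmod (\<Sum>a\<in>S. cnj (x a) * u a))^2 \<le> (\<Sum>a\<in>S. cmod (x a) * cmod (u a))^2"
    by (intro power_mono) auto
  also have "\<dots> \<le> (\<Sum>a\<in>S. (cmod (x a))^2) * (\<Sum>a\<in>S. (cmod (u a))^2)" by (rule cs_real)
  finally show ?thesis .
qed

definition rho :: "complex vec \<Rightarrow> nat \<Rightarrow> nat \<Rightarrow> complex" where
  "rho v = (\<lambda>a b. v $ a * cnj (v $ b))"

definition sigf :: "nat \<Rightarrow> (nat \<Rightarrow> real) \<Rightarrow> (nat \<Rightarrow> complex vec) \<Rightarrow> nat \<Rightarrow> nat \<Rightarrow> complex" where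
  "sigf n p us = (\<lambda>a b. \<Sum>i<n. complex_of_real (p i) * (us i $ a * cnj (us i $ b)))"

lemma qf_rank1: "qf d (\<lambda>a b. u a * cnj (u b)) x = complex_of_real ((cmod (cip d x u))^2)"
proof -
  have "qf d (\<lambda>a b. u a * cnj (u b)) x = cip d x u * cnj (cip d x u)"
    unfolding qf_expand cip_def by (simp add: sum_product mult.commute mult.left_commute cnj_sum)
  thus ?thesis by (simp add: mult_cnj_self)
qed

lemma qf_rho: "qf d (rho v) x = complex_of_real ((cmod (cip d x (\<lambda>a. v $ a)))^2)"
  unfolding rho_def using qf_rank1[of d "\<lambda>a. v $ a"] by simp

lemma qf_sum_mat: "qf d (\<lambda>a b. \<Sum>i<n. c i * M i a b) x = (\<Sum>i<n. c i * qf d (M i) x)"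
  unfolding qf_expand by (simp add: sum_distrib_left sum.swap[of _ "{..<n}"] algebra_simps)

lemma qf_sigf: "qf d (sigf n p us) x = complex_of_real (\<Sum>i<n. p i * (cmod (cip d x (\<lambda>a. us i $ a)))^2)"
proof -
  have "qf d (sigf n p us) x = (\<Sum>i<n. complex_of_real (p i) * qf d (\<lambda>a b. us i $ a * cnj (us i $ b)) x)"
    unfolding sigf_def by (rule qf_sum_mat)
  also have "\<dots> = (\<Sum>i<n. complex_of_real (p i * (cmod (cip d x (\<lambda>a. us i $ a)))^2))"
    by (simp add: qf_rank1)
  finally show ?thesis by simp
qed

lemma qf_diff: "qf d (\<lambda>a b. A a b - B a b) x = qf d A x - qf d B x"
  unfolding qf_expand by (simp add: algebra_simps sum_subtractf)

lemma sparse_bound: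
  assumes u: "u \<in> carrier_vec d" and uu: "unit_cvec u" and sp: "sparse k u"
  shows "(cmod (cip d x (\<lambda>a. u $ a)))^2 \<le> tk d k (\<lambda>a. cmod (x a))"
proof -
  define S where "S = {i. i < dim_vec u \<and> u $ i \<noteq> 0}"
  have S: "S \<subseteq> {..<d}" "card S \<le> k" using u sp unfolding S_def sparse_def by auto
  have "cip d x (\<lambda>a. u $ a) = (\<Sum>a\<in>S. cnj (x a) * u $ a)"
    unfolding cip_def using S(1) u by (intro sum.mono_neutral_right) (auto simp: S_def)
  hence "(cmod (cip d x (\<lambda>a. u $ a)))^2 \<le> (\<Sum>a\<in>S. (cmod (x a))^2) * (\<Sum>a\<in>S. (cmod (u $ a))^2)"
    using cs_complex by simp
  also have "(\<Sum>a\<in>S. (cmod (u $ a))^2) = 1"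
  proof -
    have "(\<Sum>a\<in>S. (cmod (u $ a))^2) = (\<Sum>a<d. (cmod (u $ a))^2)"
      using S(1) u by (intro sum.mono_neutral_left) (auto simp: S_def)
    thus ?thesis using uu u unfolding unit_cvec_def by simp
  qed
  also have "(\<Sum>a\<in>S. (cmod (x a))^2) * 1 \<le> tk d k (\<lambda>a. cmod (x a))" using tk_ge[OF S] by simp
  finally show ?thesis .
qed

locale ikrep =
  fixes d k n :: nat and p :: "nat \<Rightarrow> real" and us :: "nat \<Rightarrow> complex vec"
  assumes pnn: "\<And>i. i < n \<Longrightarrow> p i \<ge> 0" and psum: "(\<Sum>i<n. p i) = 1"
    and usok: "\<And>i. i < n \<Longrightarrow> us i \<in> carrier_vec d \<and> unit_cvec (us i) \<and> sparse k (us i)"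
begin

lemma qf_sig_bounds:
  "0 \<le> Re (qf d (sigf n p us) x)" "Re (qf d (sigf n p us) x) \<le> tk d k (\<lambda>a. cmod (x a))"
proof -
  have e: "Re (qf d (sigf n p us) x) = (\<Sum>i<n. p i * (cmod (cip d x (\<lambda>a. us i $ a)))^2)"
    by (simp add: qf_sigf)
  show "0 \<le> Re (qf d (sigf n p us) x)" unfolding e using pnn by (intro sum_nonneg) auto
  have "(\<Sum>i<n. p i * (cmod (cip d x (\<lambda>a. us i $ a)))^2) \<le> (\<Sum>i<n. p i * tk d k (\<lambda>a. cmod (x a)))"
    using pnn usok sparse_bound by (intro sum_mono mult_left_mono) auto
  also have "\<dots> = tk d k (\<lambda>a. cmod (x a))" using psum by (simp add: sum_distrib_right[symmetric])
  finally show "Re (qf d (sigf n p us) x) \<le> tk d k (\<lambda>a. cmod (x a))" unfolding e .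
qed

lemma trace_sig: "(\<Sum>a<d. sigf n p us a a) = 1"
proof -
  have "(\<Sum>a<d. sigf n p us a a) = (\<Sum>i<n. complex_of_real (p i) * (\<Sum>a<d. us i $ a * cnj (us i $ a)))"
    unfolding sigf_def by (simp add: sum.swap[of _ "{..<d}"] sum_distrib_left)
  also have "\<dots> = (\<Sum>i<n. complex_of_real (p i))"
  proof (intro sum.cong refl)
    fix i assume "i \<in> {..<n}"
    hence "(\<Sum>a<d. (cmod (us i $ a))^2) = 1" using usok[of i] unfolding unit_cvec_def by auto
    moreover have "(\<Sum>a<d. us i $ a * cnj (us i $ a)) = complex_of_real (\<Sum>a<d. (cmod (us i $ a))^2)"
      by (simp only: mult_cnj_self of_real_sum)
    ultimately have "(\<Sum>a<d. us i $ a * cnj (us i $ a)) = 1" by simp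
    thus "complex_of_real (p i) * (\<Sum>a<d. us i $ a * cnj (us i $ a)) = complex_of_real (p i)" by simp
  qed
  also have "\<dots> = 1" using psum by (simp flip: of_real_sum)
  finally show ?thesis .
qed

lemma herm_sig: "herm d (sigf n p us)"
  unfolding herm_def sigf_def by (simp add: cnj_sum mult.commute)

end

lemma herm_rho: "herm d (rho v)"
  unfolding herm_def rho_def by (simp add: mult.commute)

lemma herm_diff: assumes hA: "herm d A" and hB: "herm d B" shows "herm d (\<lambda>a b. A a b - B a b)"
  unfolding herm_def
proof (intro allI impI)
  fix a b assume ab: "a < d" "b < d"
  have "A b a = cnj (A a b)" "B b a = cnj (B a b)"
    using hA[unfolded herm_def, rule_format, OF ab] hB[unfolded herm_def, rule_format, OF ab] by auto
  thus "A b a - B b a = cnj (A a b - B a b)" by simp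
qed

lemma trace_rho: assumes "v \<in> carrier_vec d" "unit_cvec v" shows "(\<Sum>a<d. rho v a a) = 1"
proof -
  have "(\<Sum>a<d. (cmod (v $ a))^2) = 1" using assms unfolding unit_cvec_def by simp
  moreover have "(\<Sum>a<d. v $ a * cnj (v $ a)) = complex_of_real (\<Sum>a<d. (cmod (v $ a))^2)"
    by (simp only: mult_cnj_self of_real_sum)
  ultimately show ?thesis unfolding rho_def by simp
qed

lemma qf_mat_cong: "(\<And>a b. a < d \<Longrightarrow> b < d \<Longrightarrow> A a b = B a b) \<Longrightarrow> qf d A x = qf d B x"
  unfolding qf_expand by (intro sum.cong refl) auto

lemma herm_cong: "(\<And>a b. a < d \<Longrightarrow> b < d \<Longrightarrow> A a b = B a b) \<Longrightarrow> herm d B \<Longrightarrow> herm d A"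
  unfolding herm_def by metis

lemma Ik_rep: assumes "\<sigma> \<in> Ik d k"
  shows "\<exists>n p us. ikrep d k n p us \<and> \<sigma> = mat d d (\<lambda>(a,b). sigf n p us a b)"
  using assms unfolding Ik_def sigf_def ikrep_def by blast

definition Dm :: "complex vec \<Rightarrow> nat \<Rightarrow> (nat \<Rightarrow> real) \<Rightarrow> (nat \<Rightarrow> complex vec) \<Rightarrow> nat \<Rightarrow> nat \<Rightarrow> complex" where
  "Dm v n p us = (\<lambda>a b. rho v a b - sigf n p us a b)"

lemma F_char:
  assumes v: "v \<in> carrier_vec d" and vu: "unit_cvec v" and d0: "0 < d"
    and ik: "ikrep d k n p us" and \<sigma>: "\<sigma> = mat d d (\<lambda>(a,b). sigf n p us a b)"
  shows "\<exists>x0. nrm2 d x0 = 1 \<and> trace_norm (outer v - \<sigma>) / 2 = Re (qf d (Dm v n p us) x0)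
           \<and> (\<forall>x. nrm2 d x = 1 \<longrightarrow> Re (qf d (Dm v n p us) x) \<le> trace_norm (outer v - \<sigma>) / 2)"
proof -
  interpret ikrep d k n p us by (rule ik)
  define D where "D = outer v - \<sigma>"
  have dv: "dim_vec v = d" using v by simp
  have Dc: "D \<in> carrier_mat d d" unfolding D_def \<sigma> outer_def dv by (intro minus_carrier_mat) auto
  have De: "D $$ (a,b) = Dm v n p us a b" if "a < d" "b < d" for a b
    unfolding D_def \<sigma> outer_def Dm_def rho_def dv using that by simp
  have qfe: "qf d (\<lambda>a b. D $$ (a,b)) x = qf d (Dm v n p us) x" for x
    using De by (intro qf_mat_cong) auto
  have h: "herm d (\<lambda>a b. D $$ (a,b))"
    by (rule herm_cong[OF _ herm_diff[OF herm_rho herm_sig]]) (use De in \<open>simp add: Dm_def\<close>)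
  have tr: "(\<Sum>a<d. D $$ (a,a)) = 0"
  proof -
    have "(\<Sum>a<d. D $$ (a,a)) = (\<Sum>a<d. rho v a a) - (\<Sum>a<d. sigf n p us a a)"
      using De by (simp add: Dm_def sum_subtractf)
    thus ?thesis using trace_rho[OF v vu] trace_sig by simp
  qed
  have np: "Re (qf d (\<lambda>a b. D $$ (a,b)) x) \<le> 0" if "cip d x (\<lambda>a. v $ a) = 0" for x
  proof -
    have "Re (qf d (\<lambda>a b. D $$ (a,b)) x) = Re (qf d (rho v) x) - Re (qf d (sigf n p us) x)"
      unfolding qfe Dm_def qf_diff by simp
    also have "\<dots> = - Re (qf d (sigf n p us) x)" using that by (simp add: qf_rho)
    finally show ?thesis using qf_sig_bounds(1)[of x] by simp
  qed
  obtain x0 where x0: "nrm2 d x0 = 1" "trace_norm D / 2 = Re (qf d (\<lambda>a b. D $$ (a,b)) x0)"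
    "\<And>x. nrm2 d x = 1 \<Longrightarrow> Re (qf d (\<lambda>a b. D $$ (a,b)) x) \<le> trace_norm D / 2"
    using tn_char[OF Dc h d0 tr np] by blast
  show ?thesis
  proof (intro exI conjI allI impI)
    show "nrm2 d x0 = 1" by (rule x0(1))
    show "trace_norm (outer v - \<sigma>) / 2 = Re (qf d (Dm v n p us) x0)" using x0(2) qfe[of x0] unfolding D_def by simp
    fix x assume "nrm2 d x = 1"
    thus "Re (qf d (Dm v n p us) x) \<le> trace_norm (outer v - \<sigma>) / 2" using x0(3)[of x] qfe[of x] unfolding D_def by simp
  qed
qed

definition ph :: "complex \<Rightarrow> complex" where
  "ph z = (if z = 0 then 1 else z / complex_of_real (cmod z))"

lemma ph_prop: "cnj (ph z) * z = complex_of_real (cmod z)" "cmod (ph z) = 1"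
proof -
  show "cnj (ph z) * z = complex_of_real (cmod z)"
  proof (cases "z = 0")
    case False
    have "cnj z * z / complex_of_real (cmod z) = complex_of_real ((cmod z)^2) / complex_of_real (cmod z)"
      by (simp add: cnj_mult_self)
    also have "\<dots> = complex_of_real (cmod z)" using False by (simp add: power2_eq_square)
    finally show ?thesis using False unfolding ph_def by simp
  qed (simp add: ph_def)
  show "cmod (ph z) = 1" unfolding ph_def by (simp add: norm_divide)
qed

definition fobj :: "nat \<Rightarrow> nat \<Rightarrow> complex vec \<Rightarrow> (nat \<Rightarrow> real) \<Rightarrow> real" where
  "fobj d k v mr = (\<Sum>i<d. mr i * vdown v ! i)^2 - tk d k mr"

lemma lower_pt:
  assumes v: "v \<in> carrier_vec d" and ik: "ikrep d k n p us" and mr: "(\<Sum>i<d. (mr i)^2) = 1"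
  shows "\<exists>x. nrm2 d x = 1 \<and> fobj d k v mr \<le> Re (qf d (Dm v n p us) x)"
proof -
  interpret ikrep d k n p us by (rule ik)
  obtain h where h: "bij_betw h {..<d} {..<d}" "\<And>i. i < d \<Longrightarrow> cmod (v $ i) = vdown v ! h i"
    using vdown_perm2[OF v] by blast
  have hd: "h a < d" if "a < d" for a using h(1) that unfolding bij_betw_def by auto
  define x where "x = (\<lambda>a. complex_of_real (mr (h a)) * ph (v $ a))"
  have "cip d x (\<lambda>a. v $ a) = (\<Sum>a<d. complex_of_real (mr (h a) * vdown v ! h a))"
    unfolding cip_def x_def using h(2) by (intro sum.cong refl) (simp add: mult.assoc ph_prop)
  also have "\<dots> = complex_of_real (\<Sum>i<d. mr i * vdown v ! i)"
    unfolding of_real_sum[symmetric] using sum.reindex_bij_betw[OF h(1), of "\<lambda>i. mr i * vdown v ! i"] by simp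
  finally have c: "cip d x (\<lambda>a. v $ a) = complex_of_real (\<Sum>i<d. mr i * vdown v ! i)" .
  have "nrm2 d x = (\<Sum>a<d. (mr (h a))^2)" unfolding nrm2_def x_def by (simp add: norm_mult ph_prop)
  also have "\<dots> = 1" using sum.reindex_bij_betw[OF h(1), of "\<lambda>i. (mr i)^2"] mr by simp
  finally have n1: "nrm2 d x = 1" .
  have "tk d k (\<lambda>a. cmod (x a)) = tk d k (\<lambda>a. mr (h a))"
    unfolding x_def by (intro tk_cong) (simp add: norm_mult ph_prop)
  also have "\<dots> = tk d k mr" by (rule tk_perm[OF h(1)])
  finally have t: "tk d k (\<lambda>a. cmod (x a)) = tk d k mr" .
  have "Re (qf d (Dm v n p us) x) = Re (qf d (rho v) x) - Re (qf d (sigf n p us) x)"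
    unfolding Dm_def qf_diff by simp
  also have "Re (qf d (rho v) x) = (\<Sum>i<d. mr i * vdown v ! i)^2"
    unfolding qf_rho c norm_of_real by (simp only: Re_complex_of_real power2_abs)
  finally have "Re (qf d (Dm v n p us) x) \<ge> fobj d k v mr"
    unfolding fobj_def using qf_sig_bounds(2)[of x] t by simp
  thus ?thesis using n1 by blast
qed

lemma lower_bound_sigma:
  assumes v: "v \<in> carrier_vec d" and vu: "unit_cvec v" and d0: "0 < d"
    and \<sigma>: "\<sigma> \<in> Ik d k" and mr: "(\<Sum>i<d. (mr i)^2) = 1"
  shows "fobj d k v mr \<le> trace_norm (outer v - \<sigma>) / 2"
proof -
  obtain n p us where ik: "ikrep d k n p us" and s: "\<sigma> = mat d d (\<lambda>(a,b). sigf n p us a b)"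
    using Ik_rep[OF \<sigma>] by blast
  obtain x where x: "nrm2 d x = 1" "fobj d k v mr \<le> Re (qf d (Dm v n p us) x)"
    using lower_pt[OF v ik mr] by blast
  thus ?thesis using F_char[OF v vu d0 ik s] by force
qed

definition mip :: "nat \<Rightarrow> (nat \<Rightarrow> nat \<Rightarrow> complex) \<Rightarrow> (nat \<Rightarrow> nat \<Rightarrow> complex) \<Rightarrow> complex" where
  "mip d Y Z = (\<Sum>a<d. \<Sum>b<d. cnj (Y a b) * Z a b)"
definition dist2 :: "nat \<Rightarrow> (nat \<Rightarrow> nat \<Rightarrow> complex) \<Rightarrow> real" where
  "dist2 d Z = (\<Sum>a<d. \<Sum>b<d. (cmod (Z a b))^2)"
definition comb :: "real \<Rightarrow> (nat \<Rightarrow> nat \<Rightarrow> complex) \<Rightarrow> (nat \<Rightarrow> nat \<Rightarrow> complex) \<Rightarrow> nat \<Rightarrow> nat \<Rightarrow> complex" where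
  "comb s A B = (\<lambda>a b. complex_of_real (1 - s) * A a b + complex_of_real s * B a b)"

lemma cmod_sq_expand:
  "(cmod (z + complex_of_real s * w))^2 = (cmod z)^2 + 2 * s * Re (cnj z * w) + s^2 * (cmod w)^2"
  unfolding cmod_power2 by (simp add: power2_eq_square algebra_simps)

lemma dist2_expand:
  "dist2 d (\<lambda>a b. Z a b + complex_of_real s * V a b) = dist2 d Z + 2 * s * Re (mip d Z V) + s^2 * dist2 d V"
  unfolding dist2_def mip_def cmod_sq_expand
  by (simp only: sum.distrib Re_sum sum_distrib_left)

lemma dist2_nonneg: "dist2 d Z \<ge> 0"
  unfolding dist2_def by (intro sum_nonneg) auto

lemma entry_le_dist2: "a < d \<Longrightarrow> b < d \<Longrightarrow> (cmod (Z a b))^2 \<le> dist2 d Z"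
proof -
  assume ab: "a < d" "b < d"
  have "(cmod (Z a b))^2 \<le> (\<Sum>b'<d. (cmod (Z a b'))^2)" using ab by (intro member_le_sum) auto
  also have "\<dots> \<le> dist2 d Z" unfolding dist2_def using ab by (intro member_le_sum[of a]) (auto intro: sum_nonneg)
  finally show ?thesis .
qed

lemma mip_self: "Re (mip d Z Z) = dist2 d Z"
  unfolding mip_def dist2_def by (simp add: cnj_mult_self)

lemma mip_diff_right: "mip d Z (\<lambda>a b. A a b - B a b) = mip d Z A - mip d Z B"
  unfolding mip_def by (simp add: algebra_simps sum_subtractf)

lemma tendsto_dist2:
  assumes "\<forall>a<d. \<forall>b<d. (\<lambda>j. X j a b) \<longlonglongrightarrow> Z a b"
  shows "(\<lambda>j. dist2 d (X j)) \<longlonglongrightarrow> dist2 d Z"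
  unfolding dist2_def using assms by (intro tendsto_sum tendsto_power tendsto_norm) auto

lemma separation:
  fixes K L :: "(nat \<Rightarrow> nat \<Rightarrow> complex) set"
  assumes K0: "\<sigma>0 \<in> K" and L0: "\<tau>0 \<in> L"
    and Kc: "\<And>A B s. A \<in> K \<Longrightarrow> B \<in> K \<Longrightarrow> 0 \<le> s \<Longrightarrow> s \<le> 1 \<Longrightarrow> comb s A B \<in> K"
    and Lc: "\<And>A B s. A \<in> L \<Longrightarrow> B \<in> L \<Longrightarrow> 0 \<le> s \<Longrightarrow> s \<le> 1 \<Longrightarrow> comb s A B \<in> L"
    and gap: "\<And>\<sigma> \<tau>. \<sigma> \<in> K \<Longrightarrow> \<tau> \<in> L \<Longrightarrow> dist2 d (\<lambda>a b. \<sigma> a b - \<tau> a b) \<ge> \<delta>0" and d0: "\<delta>0 > 0"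
  shows "\<exists>Y \<delta>. \<delta> > 0 \<and> (\<forall>\<sigma>\<in>K. \<forall>\<tau>\<in>L. Re (mip d Y (\<lambda>a b. \<sigma> a b - \<tau> a b)) \<ge> \<delta>)"
proof -
  define Dset where "Dset = {dist2 d (\<lambda>a b. \<sigma> a b - \<tau> a b) | \<sigma> \<tau>. \<sigma> \<in> K \<and> \<tau> \<in> L}"
  define \<delta> where "\<delta> = Inf Dset"
  have Dne: "Dset \<noteq> {}" unfolding Dset_def using K0 L0 by blast
  have Dbdd: "bdd_below Dset" unfolding Dset_def by (rule bdd_belowI[of _ 0]) (auto simp: dist2_nonneg)
  have low: "\<delta> \<le> dist2 d (\<lambda>a b. \<sigma> a b - \<tau> a b)" if "\<sigma> \<in> K" "\<tau> \<in> L" for \<sigma> \<tau>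
    unfolding \<delta>_def using that Dbdd by (intro cInf_lower) (auto simp: Dset_def)
  have dpos: "\<delta> \<ge> \<delta>0" unfolding \<delta>_def using Dne gap by (intro cInf_greatest) (auto simp: Dset_def)
  have "\<exists>\<sigma> \<tau>. \<sigma> \<in> K \<and> \<tau> \<in> L \<and> dist2 d (\<lambda>a b. \<sigma> a b - \<tau> a b) < \<delta> + 1 / (real j + 1)" for j
  proof -
    have "\<delta> < \<delta> + 1 / (real j + 1)" by simp
    then obtain z where "z \<in> Dset" "z < \<delta> + 1 / (real j + 1)"
      unfolding \<delta>_def using cInf_lessD[OF Dne] by blast
    thus ?thesis unfolding Dset_def by blast
  qed
  then obtain Sg Tu where ST: "\<And>j. Sg j \<in> K" "\<And>j. Tu j \<in> L"
    "\<And>j. dist2 d (\<lambda>a b. Sg j a b - Tu j a b) < \<delta> + 1 / (real j + 1)" by metis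
  define Z where "Z j = (\<lambda>a b. Sg j a b - Tu j a b)" for j
  have Zb: "cmod (Z j a b) \<le> \<delta> + 2" if "a < d" "b < d" for j a b
  proof -
    have "(cmod (Z j a b))^2 \<le> dist2 d (Z j)" by (rule entry_le_dist2[OF that])
    also have "\<dots> < \<delta> + 1"
    proof -
      have "1 / (real j + 1) \<le> 1" by simp
      thus ?thesis using ST(3)[of j] unfolding Z_def by linarith
    qed
    finally have "(cmod (Z j a b))^2 < \<delta> + 1" .
    moreover have "cmod (Z j a b) \<le> 1 + (cmod (Z j a b))^2"
    proof -
      have "0 \<le> (cmod (Z j a b) - 1)^2" by simp
      hence "2 * cmod (Z j a b) \<le> (cmod (Z j a b))^2 + 1" by (simp add: power2_diff)
      thus ?thesis using norm_ge_zero[of "Z j a b"] by linarith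
    qed
    ultimately show ?thesis by simp
  qed
  obtain r l where rl: "strict_mono r" "\<forall>i\<in>{..<d}\<times>{..<d}. (\<lambda>j. (\<lambda>(a,b). Z (r j) a b) i) \<longlonglongrightarrow> l i"
    using multi_BW[of "{..<d}\<times>{..<d}" "\<lambda>j (a,b). Z j a b" "\<delta> + 2"] Zb by fastforce
  define Zs where "Zs = (\<lambda>a b. l (a,b))"
  have conv: "\<forall>a<d. \<forall>b<d. (\<lambda>j. Z (r j) a b) \<longlonglongrightarrow> Zs a b"
    using rl(2) unfolding Zs_def by auto
  have P1: "dist2 d Zs = \<delta>"
  proof -
    have c1: "(\<lambda>j. dist2 d (Z (r j))) \<longlonglongrightarrow> dist2 d Zs" by (rule tendsto_dist2[OF conv])
    have lo: "\<delta> \<le> dist2 d (Z (r j))" for j unfolding Z_def using ST low by blast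
    have up: "dist2 d (Z (r j)) \<le> \<delta> + 1 / (real j + 1)" for j
    proof -
      have "j \<le> r j" using rl(1) by (simp add: seq_suble)
      hence "1 / (real (r j) + 1) \<le> 1 / (real j + 1)" by (simp add: frac_le)
      thus ?thesis using ST(3)[of "r j"] unfolding Z_def by linarith
    qed
    have "(\<lambda>j. \<delta> + 1 / (real j + 1)) \<longlonglongrightarrow> \<delta> + 0"
      by (intro tendsto_add tendsto_const) (use LIMSEQ_inverse_real_of_nat in \<open>simp add: inverse_eq_divide add.commute\<close>)
    hence lim: "(\<lambda>j. \<delta> + 1 / (real j + 1)) \<longlonglongrightarrow> \<delta>" by simp
    have lo2: "\<forall>j. \<delta> \<le> dist2 d (Z (r j))" using lo by blast
    have up2: "\<forall>j. dist2 d (Z (r j)) \<le> \<delta> + 1 / (real j + 1)" using up by blast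
    have "(\<lambda>j. dist2 d (Z (r j))) \<longlonglongrightarrow> \<delta>"
      by (rule tendsto_sandwich[OF always_eventually[OF lo2] always_eventually[OF up2] tendsto_const lim])
    thus ?thesis using LIMSEQ_unique[OF c1] by simp
  qed
  have P3: "Re (mip d Zs (\<lambda>a b. \<sigma> a b - \<tau> a b)) \<ge> \<delta>" if \<sigma>: "\<sigma> \<in> K" and \<tau>: "\<tau> \<in> L" for \<sigma> \<tau>
  proof -
    define W where "W = (\<lambda>a b. \<sigma> a b - \<tau> a b)"
    define V where "V = (\<lambda>a b. W a b - Zs a b)"
    have P2: "\<delta> \<le> dist2 d (\<lambda>a b. Zs a b + complex_of_real s * V a b)" if s: "0 < s" "s \<le> 1" for s
    proof -
      have mem: "\<delta> \<le> dist2 d (\<lambda>a b. Z j a b + complex_of_real s * (W a b - Z j a b))" for j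
      proof -
        have "\<delta> \<le> dist2 d (\<lambda>a b. comb s (Sg j) \<sigma> a b - comb s (Tu j) \<tau> a b)"
          using low[OF Kc[OF ST(1) \<sigma>] Lc[OF ST(2) \<tau>]] s by auto
        also have "(\<lambda>a b. comb s (Sg j) \<sigma> a b - comb s (Tu j) \<tau> a b) = (\<lambda>a b. Z j a b + complex_of_real s * (W a b - Z j a b))"
          unfolding comb_def Z_def W_def by (intro ext) (simp add: algebra_simps)
        finally show ?thesis .
      qed
      have "(\<lambda>j. dist2 d (\<lambda>a b. Z (r j) a b + complex_of_real s * (W a b - Z (r j) a b)))
             \<longlonglongrightarrow> dist2 d (\<lambda>a b. Zs a b + complex_of_real s * (W a b - Zs a b))"
        using conv by (intro tendsto_dist2) (auto intro!: tendsto_intros)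
      hence "\<delta> \<le> dist2 d (\<lambda>a b. Zs a b + complex_of_real s * (W a b - Zs a b))"
        by (rule LIMSEQ_le_const) (use mem in auto)
      thus ?thesis unfolding V_def .
    qed
    have q: "Re (mip d Zs V) \<ge> 0"
    proof (rule ccontr)
      assume "\<not> Re (mip d Zs V) \<ge> 0"
      hence qn: "Re (mip d Zs V) < 0" by simp
      define D where "D = dist2 d V"
      have D0: "D \<ge> 0" unfolding D_def by (rule dist2_nonneg)
      define s where "s = min 1 (- Re (mip d Zs V) / (D + 1))"
      have "0 < - Re (mip d Zs V) / (D + 1)" using qn D0 by (intro divide_pos_pos) auto
      hence s0: "0 < s" "s \<le> 1" unfolding s_def by auto
      have "\<delta> \<le> \<delta> + 2 * s * Re (mip d Zs V) + s^2 * D"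
        using P2[OF s0] unfolding dist2_expand P1 D_def .
      hence "0 \<le> s * (2 * Re (mip d Zs V) + s * D)" by (simp add: power2_eq_square algebra_simps)
      hence h: "0 \<le> 2 * Re (mip d Zs V) + s * D" using s0 by (simp add: zero_le_mult_iff)
      have "s * D \<le> (- Re (mip d Zs V) / (D + 1)) * D" unfolding s_def using D0 by (intro mult_right_mono) auto
      also have "\<dots> \<le> - Re (mip d Zs V)" using D0 qn by (simp add: divide_le_eq field_simps)
      finally show False using h qn by linarith
    qed
    have "Re (mip d Zs W) = Re (mip d Zs Zs) + Re (mip d Zs V)"
      unfolding V_def mip_diff_right by simp
    thus ?thesis using q P1 mip_self[of d Zs] unfolding W_def by linarith
  qed
  show ?thesis using P3 dpos d0 by (intro exI[of _ Zs] exI[of _ \<delta>]) auto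
qed

lemma sum_split_add: fixes f :: "nat \<Rightarrow> 'a::comm_monoid_add" and n1 n2 :: nat
  shows "(\<Sum>i<n1 + n2. f i) = (\<Sum>i<n1. f i) + (\<Sum>i<n2. f (n1 + i))"
  by (induction n2) (simp_all add: add.assoc)

lemma K_conv:
  assumes r1: "ikrep d k n1 p1 us1" and r2: "ikrep d k n2 p2 us2" and s: "0 \<le> s" "s \<le> 1"
  shows "\<exists>n p us. ikrep d k n p us \<and> comb s (sigf n1 p1 us1) (sigf n2 p2 us2) = sigf n p us"
proof -
  interpret A: ikrep d k n1 p1 us1 by (rule r1)
  interpret B: ikrep d k n2 p2 us2 by (rule r2)
  define p where "p i = (if i < n1 then (1 - s) * p1 i else s * p2 (i - n1))" for i
  define us where "us i = (if i < n1 then us1 i else us2 (i - n1))" for i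
  have "ikrep d k (n1 + n2) p us"
  proof
    fix i assume i: "i < n1 + n2"
    show "0 \<le> p i" unfolding p_def using i s A.pnn B.pnn by auto
    show "us i \<in> carrier_vec d \<and> unit_cvec (us i) \<and> sparse k (us i)"
      unfolding us_def using i A.usok B.usok by auto
  next
    show "(\<Sum>i<n1 + n2. p i) = 1"
      unfolding sum_split_add p_def using A.psum B.psum
      by (simp add: sum_distrib_left[symmetric])
  qed
  moreover have "comb s (sigf n1 p1 us1) (sigf n2 p2 us2) = sigf (n1 + n2) p us"
    unfolding comb_def sigf_def sum_split_add p_def us_def
    by (intro ext) (simp add: sum_distrib_left algebra_simps)
  ultimately show ?thesis by blast
qed

lemma qf_lincomb: "qf d (\<lambda>a b. c1 * A a b + c2 * B a b) x = c1 * qf d A x + c2 * qf d B x"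
  unfolding qf_expand by (simp add: sum.distrib sum_distrib_left algebra_simps)

lemma qf_id: "qf d (\<lambda>a b. if a = b then c else 0) x = c * complex_of_real (nrm2 d x)"
proof -
  have "qf d (\<lambda>a b. if a = b then c else 0) x = (\<Sum>a<d. c * (cnj (x a) * x a))"
    unfolding qf_expand
  proof (intro sum.cong refl)
    fix a assume a: "a \<in> {..<d}"
    have "(\<Sum>b<d. cnj (x a) * (if a = b then c else 0) * x b) = (\<Sum>b<d. if b = a then c * (cnj (x a) * x a) else 0)"
      by (intro sum.cong refl) auto
    also have "\<dots> = c * (cnj (x a) * x a)" using a by simp
    finally show "(\<Sum>b<d. cnj (x a) * (if a = b then c else 0) * x b) = c * (cnj (x a) * x a)" .
  qed
  also have "\<dots> = c * cip d x x" unfolding cip_def by (simp add: sum_distrib_left)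
  finally show ?thesis by (simp add: cip_self)
qed

definition Lset :: "nat \<Rightarrow> complex vec \<Rightarrow> real \<Rightarrow> (nat \<Rightarrow> nat \<Rightarrow> complex) set" where
  "Lset d v M = {\<tau>. \<forall>x. nrm2 d x = 1 \<longrightarrow> Re (qf d (\<lambda>a b. rho v a b - \<tau> a b) x) \<le> M}"

lemma L_conv:
  assumes "A \<in> Lset d v M" "B \<in> Lset d v M" "0 \<le> s" "s \<le> 1"
  shows "comb s A B \<in> Lset d v M"
  unfolding Lset_def
proof (intro CollectI allI impI)
  fix x assume x: "nrm2 d x = 1"
  have "(\<lambda>a b. rho v a b - comb s A B a b) = (\<lambda>a b. complex_of_real (1 - s) * (rho v a b - A a b) + complex_of_real s * (rho v a b - B a b))"
    unfolding comb_def by (intro ext) (simp add: algebra_simps)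
  hence "Re (qf d (\<lambda>a b. rho v a b - comb s A B a b) x)
        = (1 - s) * Re (qf d (\<lambda>a b. rho v a b - A a b) x) + s * Re (qf d (\<lambda>a b. rho v a b - B a b) x)"
    by (simp add: qf_lincomb)
  also have "\<dots> \<le> (1 - s) * M + s * M"
    using assms x unfolding Lset_def by (intro add_mono mult_left_mono) auto
  finally show "Re (qf d (\<lambda>a b. rho v a b - comb s A B a b) x) \<le> M" by (simp add: algebra_simps)
qed

lemma qf_bound_dist2:
  assumes "nrm2 d x = 1"
  shows "cmod (qf d E x) \<le> real d * real d * sqrt (dist2 d E)"
proof -
  have "cmod (qf d E x) \<le> (\<Sum>a<d. \<Sum>b<d. cmod (E a b))" by (rule qf_bound[OF assms])
  also have "\<dots> \<le> (\<Sum>a<d. \<Sum>b<d. sqrt (dist2 d E))"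
    by (intro sum_mono real_le_rsqrt entry_le_dist2) auto
  also have "\<dots> = real d * real d * sqrt (dist2 d E)" by simp
  finally show ?thesis .
qed

definition Hm :: "(nat \<Rightarrow> nat \<Rightarrow> complex) \<Rightarrow> nat \<Rightarrow> nat \<Rightarrow> complex" where
  "Hm Y = (\<lambda>a b. - (cnj (Y b a) + Y a b) / 2)"

lemma herm_Hm: "herm d (Hm Y)"
  unfolding herm_def Hm_def by (simp add: add.commute)

lemma mip_rank1: "Re (mip d Y (\<lambda>a b. u a * cnj (u b))) = - Re (qf d (Hm Y) u)"
proof -
  define m where "m = mip d Y (\<lambda>a b. u a * cnj (u b))"
  have e0: "(\<Sum>a<d. \<Sum>b<d. cnj (u a) * cnj (Y b a) * u b) = (\<Sum>b<d. \<Sum>a<d. cnj (u a) * cnj (Y b a) * u b)"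
    by (rule sum.swap)
  also have "\<dots> = m" unfolding m_def mip_def by (intro sum.cong refl) (simp add: algebra_simps)
  finally have e1: "(\<Sum>a<d. \<Sum>b<d. cnj (u a) * cnj (Y b a) * u b) = m" .
  have e2: "(\<Sum>a<d. \<Sum>b<d. cnj (u a) * Y a b * u b) = cnj m"
    unfolding m_def mip_def cnj_sum by (intro sum.cong refl) (simp add: algebra_simps)
  have "qf d (Hm Y) u = (\<Sum>a<d. \<Sum>b<d. (-1/2) * (cnj (u a) * cnj (Y b a) * u b) + (-1/2) * (cnj (u a) * Y a b * u b))"
    unfolding qf_expand Hm_def by (intro sum.cong refl) (simp add: field_simps)
  also have "\<dots> = (-1/2) * (\<Sum>a<d. \<Sum>b<d. cnj (u a) * cnj (Y b a) * u b) + (-1/2) * (\<Sum>a<d. \<Sum>b<d. cnj (u a) * Y a b * u b)"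
    by (simp only: sum.distrib sum_distrib_left)
  finally have "qf d (Hm Y) u = (-1/2) * m + (-1/2) * cnj m" unfolding e1 e2 .
  thus ?thesis unfolding m_def by simp
qed

lemma mip_id: "Re (mip d Y (\<lambda>a b. if a = b then 1 else 0)) = - Re (\<Sum>a<d. Hm Y a a)"
proof -
  have "mip d Y (\<lambda>a b. if a = b then 1 else 0) = (\<Sum>a<d. cnj (Y a a))"
    unfolding mip_def by (intro sum.cong refl) (simp add: if_distrib sum.delta cong: if_cong)
  hence h1: "Re (mip d Y (\<lambda>a b. if a = b then 1 else 0)) = (\<Sum>a<d. Re (Y a a))" by (simp add: Re_sum)
  have h2: "Re (\<Sum>a<d. Hm Y a a) = - (\<Sum>a<d. Re (Y a a))"
    unfolding Re_sum Hm_def by (simp add: sum_negf)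
  show ?thesis using h1 h2 by linarith
qed

lemma mip_combo: "mip d Y (\<lambda>a b. A a b - (B a b - c1 * C a b + c2 * D a b)) = mip d Y A - mip d Y B + c1 * mip d Y C - c2 * mip d Y D"
  unfolding mip_def by (simp add: sum.distrib sum_subtractf sum_distrib_left algebra_simps)

lemma wcs:
  fixes w :: "nat \<Rightarrow> real"
  assumes "\<And>j. j \<in> A \<Longrightarrow> w j \<ge> 0"
  shows "(cmod (\<Sum>j\<in>A. cnj (b j) * (complex_of_real (w j) * c j)))^2
         \<le> (\<Sum>j\<in>A. w j * (cmod (b j))^2) * (\<Sum>j\<in>A. w j * (cmod (c j))^2)"
proof -
  have "cmod (\<Sum>j\<in>A. cnj (b j) * (complex_of_real (w j) * c j)) \<le> (\<Sum>j\<in>A. (sqrt (w j) * cmod (b j)) * (sqrt (w j) * cmod (c j)))"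
  proof (rule order_trans[OF norm_sum], intro sum_mono)
    fix j assume "j \<in> A"
    hence w0: "w j \<ge> 0" using assms by auto
    have "cmod (cnj (b j) * (complex_of_real (w j) * c j)) = w j * (cmod (b j) * cmod (c j))"
      using w0 by (simp add: norm_mult)
    also have "\<dots> = (sqrt (w j) * sqrt (w j)) * (cmod (b j) * cmod (c j))" using w0 by simp
    also have "\<dots> = (sqrt (w j) * cmod (b j)) * (sqrt (w j) * cmod (c j))" by (simp only: ac_simps)
    finally show "cmod (cnj (b j) * (complex_of_real (w j) * c j)) \<le> (sqrt (w j) * cmod (b j)) * (sqrt (w j) * cmod (c j))"
      by simp
  qed
  hence "(cmod (\<Sum>j\<in>A. cnj (b j) * (complex_of_real (w j) * c j)))^2 \<le> (\<Sum>j\<in>A. (sqrt (w j) * cmod (b j)) * (sqrt (w j) * cmod (c j)))^2"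
    by (intro power_mono) auto
  also have "\<dots> \<le> (\<Sum>j\<in>A. (sqrt (w j) * cmod (b j))^2) * (\<Sum>j\<in>A. (sqrt (w j) * cmod (c j))^2)" by (rule cs_real)
  also have "\<dots> = (\<Sum>j\<in>A. w j * (cmod (b j))^2) * (\<Sum>j\<in>A. w j * (cmod (c j))^2)"
    using assms by (simp add: power_mult_distrib)
  finally show ?thesis .
qed

definition Kset :: "nat \<Rightarrow> nat \<Rightarrow> (nat \<Rightarrow> nat \<Rightarrow> complex) set" where
  "Kset d k = {sigf n p us | n p us. ikrep d k n p us}"

definition good :: "nat \<Rightarrow> nat \<Rightarrow> complex vec \<Rightarrow> bool" where
  "good d k u \<longleftrightarrow> u \<in> carrier_vec d \<and> unit_cvec u \<and> sparse k u"

lemma rank1_K: assumes "good d k u" shows "(\<lambda>a b. u $ a * cnj (u $ b)) \<in> Kset d k"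
proof -
  have ik: "ikrep d k 1 (\<lambda>_. 1) (\<lambda>_. u)" using assms unfolding good_def by unfold_locales auto
  have eq: "sigf 1 (\<lambda>_. 1) (\<lambda>_. u) = (\<lambda>a b. u $ a * cnj (u $ b))" unfolding sigf_def by simp
  show ?thesis unfolding Kset_def mem_Collect_eq
    by (rule exI[of _ 1], rule exI[of _ "\<lambda>_. 1"], rule exI[of _ "\<lambda>_. u"]) (use ik eq in auto)
qed

lemma tau_L:
  assumes "t \<ge> 0"
  shows "(\<lambda>a b. rho v a b - complex_of_real M * (if a = b then 1 else 0) + complex_of_real t * (y a * cnj (y b))) \<in> Lset d v M"
  unfolding Lset_def
proof (intro CollectI allI impI)
  fix x assume x: "nrm2 d x = 1"
  let ?\<tau> = "\<lambda>a b. rho v a b - complex_of_real M * (if a = b then 1 else 0) + complex_of_real t * (y a * cnj (y b))"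
  have "qf d (\<lambda>a b. rho v a b - ?\<tau> a b) x
      = qf d (\<lambda>a b. complex_of_real M * (if a = b then 1 else 0) + complex_of_real (- t) * (y a * cnj (y b))) x"
    by (intro qf_mat_cong) simp
  also have "\<dots> = complex_of_real M * qf d (\<lambda>a b. if a = b then 1 else 0) x + complex_of_real (- t) * qf d (\<lambda>a b. y a * cnj (y b)) x"
    by (rule qf_lincomb)
  also have "\<dots> = complex_of_real (M * nrm2 d x - t * (cmod (cip d x y))^2)"
    by (simp add: qf_id qf_rank1)
  finally have "Re (qf d (\<lambda>a b. rho v a b - ?\<tau> a b) x) = M * nrm2 d x - t * (cmod (cip d x y))^2" by simp
  also have "\<dots> \<le> M" using x assms by simp
  finally show "Re (qf d (\<lambda>a b. rho v a b - ?\<tau> a b) x) \<le> M" .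
qed

lemma key_ineq:
  assumes Y: "\<forall>\<sigma>\<in>Kset d k. \<forall>\<tau>\<in>Lset d v M. Re (mip d Y (\<lambda>a b. \<sigma> a b - \<tau> a b)) \<ge> \<delta>"
    and u: "good d k u" and t: "t \<ge> 0"
  shows "- Re (qf d (Hm Y) (\<lambda>a. u $ a)) + Re (qf d (Hm Y) (\<lambda>a. v $ a)) - M * Re (\<Sum>a<d. Hm Y a a)
          + t * Re (qf d (Hm Y) y) \<ge> \<delta>"
proof -
  have "Re (mip d Y (\<lambda>a b. u $ a * cnj (u $ b) - (rho v a b - complex_of_real M * (if a = b then 1 else 0) + complex_of_real t * (y a * cnj (y b))))) \<ge> \<delta>"
    by (rule Y[rule_format, OF rank1_K[OF u] tau_L[where v=v and M=M and y=y and d=d, OF t]])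
  also have "Re (mip d Y (\<lambda>a b. u $ a * cnj (u $ b) - (rho v a b - complex_of_real M * (if a = b then 1 else 0) + complex_of_real t * (y a * cnj (y b)))))
    = Re (mip d Y (\<lambda>a b. u $ a * cnj (u $ b))) - Re (mip d Y (rho v)) + M * Re (mip d Y (\<lambda>a b. if a = b then 1 else 0))
      - t * Re (mip d Y (\<lambda>a b. y a * cnj (y b)))"
    unfolding mip_combo by simp
  also have "\<dots> = - Re (qf d (Hm Y) (\<lambda>a. u $ a)) + Re (qf d (Hm Y) (\<lambda>a. v $ a)) - M * Re (\<Sum>a<d. Hm Y a a)
          + t * Re (qf d (Hm Y) y)"
    unfolding mip_id mip_rank1[of d Y "\<lambda>a. u $ a", simplified] rho_def mip_rank1[of d Y "\<lambda>a. v $ a", simplified]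
      mip_rank1[of d Y y] by simp
  finally show ?thesis by simp
qed

lemma good_e0: assumes "0 < k" "k \<le> d"
  shows "good d k (vec d (\<lambda>i. if i = 0 then 1 else 0))"
proof -
  have d0: "0 < d" using assms by simp
  have "{i. i < d \<and> vec d (\<lambda>i. if i = 0 then 1 else 0) $ i \<noteq> (0::complex)} = {0}" using d0 by (auto split: if_splits)
  hence sp: "sparse k (vec d (\<lambda>i. if i = 0 then 1 else (0::complex)))" unfolding sparse_def using assms by simp
  have "(\<Sum>i<d. (cmod (vec d (\<lambda>i. if i = 0 then 1 else (0::complex)) $ i))^2) = (\<Sum>i<d. if i = 0 then 1 else 0)"
    by (intro sum.cong refl) auto
  also have "\<dots> = 1" using d0 by simp
  finally show ?thesis unfolding good_def unit_cvec_def using sp by simp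
qed

lemma upper_main:
  assumes v: "v \<in> carrier_vec d" and vu: "unit_cvec v" and k0: "0 < k" and kd: "k \<le> d"
    and HM: "\<And>mr. (\<Sum>i<d. (mr i)^2) = 1 \<Longrightarrow> fobj d k v mr \<le> M" and M0: "M \<ge> 0"
    and dpos: "\<delta> > 0" and Y: "\<forall>\<sigma>\<in>Kset d k. \<forall>\<tau>\<in>Lset d v M. Re (mip d Y (\<lambda>a b. \<sigma> a b - \<tau> a b)) \<ge> \<delta>"
  shows False
proof -
  define H where "H = Hm Y"
  define qH where "qH z = Re (qf d H z)" for z
  define \<psi> where "\<psi> = (\<lambda>a. v $ a)"
  define s0 where "s0 = Re (\<Sum>a<d. H a a)"
  define a where "a = qH \<psi>"
  have hH: "herm d H" unfolding H_def by (rule herm_Hm)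
  have d0: "0 < d" using k0 kd by simp
  define u0 where "u0 = vec d (\<lambda>i. if i = 0 then 1 else (0::complex))"
  have gu0: "good d k u0" unfolding u0_def by (rule good_e0[OF k0 kd])
  have key: "- qH (\<lambda>i. u $ i) + a - M * s0 + t * qH y \<ge> \<delta>" if "good d k u" "t \<ge> 0" for u y t
    using key_ineq[OF Y that] unfolding qH_def a_def \<psi>_def s0_def H_def by simp
  have psd: "qH y \<ge> 0" for y
  proof (rule ccontr)
    assume "\<not> qH y \<ge> 0"
    hence neg: "qH y < 0" by simp
    define R where "R = - qH (\<lambda>i. u0 $ i) + a - M * s0"
    define t where "t = (\<bar>R\<bar> + \<delta> + 1) / (- qH y)"
    have t0: "t \<ge> 0" unfolding t_def using neg dpos by (intro divide_nonneg_pos) auto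
    have "t * qH y = - (\<bar>R\<bar> + \<delta> + 1)" unfolding t_def using neg by simp
    moreover have "R \<le> \<bar>R\<bar>" by simp
    moreover have "\<delta> \<le> R + t * qH y" using key[OF gu0 t0, of y] unfolding R_def by linarith
    ultimately show False using dpos by linarith
  qed
  have bu: "qH (\<lambda>i. u $ i) \<le> a - M * s0 - \<delta>" if "good d k u" for u
    using key[OF that order_refl, of \<psi>] by simp
  obtain e lam where on: "orthonormal d d e" and ev: "\<forall>j<d. \<forall>b<d. mv d H (e j) b = complex_of_real (lam j) * e j b"
    using spectral[OF hH] by blast
  interpret eigsys d H e lam using on ev by unfold_locales auto
  have qe: "qf d H (e j) = complex_of_real (lam j)" if "j < d" for j
  proof -
    have "qf d H (e j) = cip d (e j) (\<lambda>b. complex_of_real (lam j) * e j b)"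
      unfolding qf_def using ev that by (intro cip_cong) auto
    also have "\<dots> = complex_of_real (lam j)" using orth_facts[OF on that that] by (simp add: cip_scale_right)
    finally show ?thesis .
  qed
  have lam0: "lam j \<ge> 0" if "j < d" for j using psd[of "e j"] qe[OF that] unfolding qH_def by simp
  have s0e: "s0 = (\<Sum>j<d. lam j)" unfolding s0_def using trace_eig by simp
  have s0nn: "s0 \<ge> 0" unfolding s0e using lam0 by (intro sum_nonneg) auto
  define c where "c j = cip d (e j) \<psi>" for j
  have ae: "a = (\<Sum>j<d. lam j * (cmod (c j))^2)" unfolding a_def qH_def c_def using qf_eig by simp
  define x where "x = mv d H \<psi>"
  have cx: "cip d (e j) x = complex_of_real (lam j) * c j" if "j < d" for j
  proof -
    have "cip d (e j) x = cip d (mv d H (e j)) \<psi>" unfolding x_def by (rule herm_mv_sym[OF hH])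
    also have "\<dots> = cip d (\<lambda>b. complex_of_real (lam j) * e j b) \<psi>" using ev that by (intro cip_cong) auto
    also have "\<dots> = complex_of_real (lam j) * c j" unfolding c_def by (simp add: cip_scale_left)
    finally show ?thesis .
  qed
  define N where "N = nrm2 d x"
  have Ne: "N = (\<Sum>j<d. (lam j)^2 * (cmod (c j))^2)"
    unfolding N_def nrm2_eig using cx by (intro sum.cong refl) (simp add: norm_mult power_mult_distrib)
  have Nle: "N \<le> s0 * a"
  proof -
    have "N \<le> (\<Sum>j<d. s0 * (lam j * (cmod (c j))^2))"
      unfolding Ne
    proof (intro sum_mono)
      fix j assume j: "j \<in> {..<d}"
      have "lam j \<le> s0" unfolding s0e using lam0 j by (intro member_le_sum) auto
      hence "lam j * lam j \<le> s0 * lam j" using lam0 j by (intro mult_right_mono) auto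
      thus "(lam j)^2 * (cmod (c j))^2 \<le> s0 * (lam j * (cmod (c j))^2)"
        by (simp add: power2_eq_square mult.assoc[symmetric] mult_right_mono)
    qed
    thus ?thesis unfolding ae by (simp add: sum_distrib_left)
  qed
  have cxpsi: "cip d x \<psi> = complex_of_real a"
  proof -
    have "cip d x \<psi> = cnj (qf d H \<psi>)" unfolding x_def qf_def by (rule cip_cnj)
    also have "\<dots> = complex_of_real a" unfolding a_def qH_def by (subst herm_qf_real[OF hH]) simp
    finally show ?thesis .
  qed
  have ux: "(cmod (cip d (\<lambda>i. u $ i) x))^2 \<le> qH (\<lambda>i. u $ i) * a" if "good d k u" for u
  proof -
    have "cip d (\<lambda>i. u $ i) x = (\<Sum>j<d. cnj (cip d (e j) (\<lambda>i. u $ i)) * cip d (e j) x)" by (rule parseval)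
    also have "\<dots> = (\<Sum>j<d. cnj (cip d (e j) (\<lambda>i. u $ i)) * (complex_of_real (lam j) * c j))"
      using cx by (intro sum.cong refl) auto
    finally have "(cmod (cip d (\<lambda>i. u $ i) x))^2 \<le> (\<Sum>j<d. lam j * (cmod (cip d (e j) (\<lambda>i. u $ i)))^2) * (\<Sum>j<d. lam j * (cmod (c j))^2)"
      using wcs[of "{..<d}" lam] lam0 by simp
    also have "\<dots> = qH (\<lambda>i. u $ i) * a" unfolding ae qH_def using qf_eig by simp
    finally show ?thesis .
  qed
  have apos: "a > 0"
  proof -
    have "0 \<le> qH (\<lambda>i. u0 $ i)" by (rule psd)
    also have "\<dots> \<le> a - M * s0 - \<delta>" by (rule bu[OF gu0])
    finally show ?thesis using M0 s0nn dpos by (smt (verit) mult_nonneg_nonneg)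
  qed
  have bnd0: "a - M * s0 - \<delta> \<ge> 0" using psd[of "\<lambda>i. u0 $ i"] bu[OF gu0] by linarith
  have psi1: "nrm2 d \<psi> = 1" using vu v unfolding unit_cvec_def nrm2_def \<psi>_def by simp
  have Npos: "N > 0"
  proof -
    have "(cmod (cip d x \<psi>))^2 \<le> nrm2 d x * nrm2 d \<psi>" unfolding cip_def nrm2_def by (rule cs_complex)
    hence "a^2 \<le> N" unfolding cxpsi N_def psi1 using apos by simp
    thus ?thesis using apos by (smt (verit) zero_less_power)
  qed
  have s0pos: "s0 > 0" using Nle Npos apos s0nn by (smt (verit) mult_nonpos_nonneg mult_eq_0_iff)
  define T where "T = tk d k (\<lambda>i. cmod (x i))"
  have Tb: "T \<le> a * (a - M * s0 - \<delta>)"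
  proof -
    obtain S where S: "S \<subseteq> {..<d}" "card S \<le> k" "T = (\<Sum>i\<in>S. (cmod (x i))^2)"
      using tk_attained unfolding T_def by blast
    show ?thesis
    proof (cases "T = 0")
      case True thus ?thesis using apos bnd0 by simp
    next
      case False
      hence Tpos: "T > 0" using tk_nonneg[of d k] unfolding T_def by (metis less_eq_real_def)
      have finS: "finite S" using S(1) finite_subset by blast
      have SI: "{..<d} \<inter> S = S" "S \<inter> {..<d} = S" using S(1) by auto
      define u where "u = vec d (\<lambda>i. if i \<in> S then x i / complex_of_real (sqrt T) else 0)"
      have "(\<Sum>i<d. (cmod (u $ i))^2) = (\<Sum>i<d. if i \<in> S then (cmod (x i))^2 / T else 0)"
        unfolding u_def using Tpos by (intro sum.cong refl) (auto simp: norm_divide power_divide)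
      also have "\<dots> = (\<Sum>i\<in>S. (cmod (x i))^2 / T)"
        using S(1) by (simp add: sum.If_cases SI)
      also have "\<dots> = 1" using S(3) Tpos by (simp add: sum_divide_distrib[symmetric])
      finally have uu: "unit_cvec u" unfolding unit_cvec_def u_def by simp
      have "{i. i < dim_vec u \<and> u $ i \<noteq> 0} \<subseteq> S" unfolding u_def by (auto split: if_splits)
      hence "card {i. i < dim_vec u \<and> u $ i \<noteq> 0} \<le> card S" using finS by (rule card_mono[rotated])
      hence sp: "sparse k u" unfolding sparse_def using S(2) by simp
      have gu: "good d k u" unfolding good_def using uu sp by (simp add: u_def)
      have "cip d (\<lambda>i. u $ i) x = (\<Sum>i<d. if i \<in> S then complex_of_real ((cmod (x i))^2 / sqrt T) else 0)"
        unfolding cip_def u_def using Tpos by (intro sum.cong refl) (auto simp: cnj_mult_self)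
      also have "\<dots> = complex_of_real ((\<Sum>i\<in>S. (cmod (x i))^2) / sqrt T)"
        using S(1) by (simp add: sum.If_cases SI sum_divide_distrib)
      also have "\<dots> = complex_of_real (sqrt T)" using S(3) Tpos by (simp add: real_div_sqrt)
      finally have "(cmod (cip d (\<lambda>i. u $ i) x))^2 = T" using Tpos by simp
      hence "T \<le> qH (\<lambda>i. u $ i) * a" using ux[OF gu] by simp
      also have "\<dots> \<le> (a - M * s0 - \<delta>) * a" using bu[OF gu] apos by (intro mult_right_mono) auto
      finally show ?thesis by (simp add: mult.commute)
    qed
  qed
  obtain g where g: "bij_betw g {..<d} {..<d}" "\<And>i. i < d \<Longrightarrow> vdown v ! i = cmod (v $ g i)"
    using vdown_perm1[OF v] by blast
  define xh where "xh = (\<lambda>i. complex_of_real (1 / sqrt N) * x i)"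
  have xh1: "nrm2 d xh = 1" unfolding xh_def N_def using normalize_nrm2 Npos unfolding N_def by blast
  define mh where "mh = (\<lambda>i. cmod (xh (g i)))"
  have mh1: "(\<Sum>i<d. (mh i)^2) = 1"
    unfolding mh_def using sum.reindex_bij_betw[OF g(1), of "\<lambda>i. (cmod (xh i))^2"] xh1 unfolding nrm2_def by simp
  have lin: "(\<Sum>i<d. mh i * vdown v ! i) \<ge> a / sqrt N"
  proof -
    have "(\<Sum>i<d. mh i * vdown v ! i) = (\<Sum>i<d. cmod (xh (g i)) * cmod (v $ g i))"
      unfolding mh_def using g(2) by simp
    also have "\<dots> = (\<Sum>i<d. cmod (xh i) * cmod (v $ i))"
      using sum.reindex_bij_betw[OF g(1), of "\<lambda>i. cmod (xh i) * cmod (v $ i)"] by simp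
    also have "\<dots> \<ge> cmod (cip d xh \<psi>)"
      unfolding cip_def \<psi>_def by (rule order_trans[OF norm_sum]) (simp add: norm_mult)
    moreover have "cip d xh \<psi> = complex_of_real (a / sqrt N)"
      unfolding xh_def cip_scale_left cxpsi by simp
    ultimately show ?thesis using apos Npos by (simp add: norm_divide)
  qed
  have lin2: "(\<Sum>i<d. mh i * vdown v ! i)^2 \<ge> a^2 / N"
  proof -
    have "(a / sqrt N)^2 \<le> (\<Sum>i<d. mh i * vdown v ! i)^2"
      using lin apos Npos by (intro power_mono) auto
    thus ?thesis using Npos by (simp add: power_divide)
  qed
  have tkm: "tk d k mh = T / N"
  proof -
    have "tk d k mh = tk d k (\<lambda>i. cmod (xh i))" unfolding mh_def by (rule tk_perm[OF g(1)])
    also have "\<dots> = tk d k (\<lambda>i. (1 / sqrt N) * cmod (x i))"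
      unfolding xh_def using Npos by (intro tk_cong) (simp add: norm_mult norm_divide)
    also have "\<dots> = (1 / sqrt N)^2 * T" unfolding T_def by (rule tk_scale)
    finally show ?thesis using Npos by (simp add: power_divide)
  qed
  have f1: "a^2 / N - T / N \<le> fobj d k v mh" unfolding fobj_def tkm using lin2 by simp
  have f2: "a * (M * s0 + \<delta>) / N \<le> a^2 / N - T / N"
  proof -
    have "a * (M * s0 + \<delta>) \<le> a^2 - T" using Tb by (simp add: power2_eq_square algebra_simps)
    thus ?thesis using Npos by (simp add: diff_divide_distrib[symmetric] divide_right_mono)
  qed
  have f3: "a * (M * s0 + \<delta>) / (s0 * a) \<le> a * (M * s0 + \<delta>) / N"
    using Nle Npos apos M0 s0nn dpos by (intro divide_left_mono) auto
  have f4: "M + \<delta> / s0 = a * (M * s0 + \<delta>) / (s0 * a)" using apos s0pos by (simp add: field_simps)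
  have "M + \<delta> / s0 \<le> fobj d k v mh" using f1 f2 f3 f4 by linarith
  moreover have "\<delta> / s0 > 0" using dpos s0pos by simp
  ultimately show False using HM[OF mh1] by linarith
qed

lemma tendsto_tk:
  assumes "\<forall>i<d. (\<lambda>j. f j i) \<longlonglongrightarrow> g i"
  shows "(\<lambda>j. tk d k (f j)) \<longlonglongrightarrow> tk d k g"
proof -
  define E where "E j = (\<Sum>i<d. \<bar>(f j i)^2 - (g i)^2\<bar>)" for j
  have "(\<lambda>j. E j) \<longlonglongrightarrow> (\<Sum>i<d. \<bar>(g i)^2 - (g i)^2\<bar>)"
    unfolding E_def using assms by (intro tendsto_sum tendsto_rabs tendsto_diff tendsto_power tendsto_const) auto
  hence E0: "(\<lambda>j. E j) \<longlonglongrightarrow> 0" by simp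
  have "norm (tk d k (f j) - tk d k g) \<le> norm (E j) * 1" for j
  proof -
    have "tk d k (f j) \<le> tk d k g + E j" unfolding E_def by (rule tk_lip)
    moreover have "tk d k g \<le> tk d k (f j) + (\<Sum>i<d. \<bar>(g i)^2 - (f j i)^2\<bar>)" by (rule tk_lip)
    moreover have "(\<Sum>i<d. \<bar>(g i)^2 - (f j i)^2\<bar>) = E j" unfolding E_def by (intro sum.cong refl) auto
    moreover have "E j \<ge> 0" unfolding E_def by (intro sum_nonneg) auto
    ultimately show ?thesis by simp
  qed
  hence "(\<lambda>j. tk d k (f j) - tk d k g) \<longlonglongrightarrow> 0"
    by (intro tendsto_0_le[OF E0, of _ 1]) auto
  thus ?thesis by (rule LIM_zero_cancel)
qed

lemma exists_max:
  assumes v: "v \<in> carrier_vec d" and d0: "0 < d"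
  shows "\<exists>x. nrm2 d x = 1 \<and> (\<forall>i<d. Im (x i) = 0) \<and>
     (\<forall>y. nrm2 d y = 1 \<and> (\<forall>i<d. Im (y i) = 0) \<longrightarrow> fobj d k v (\<lambda>i. Re (y i)) \<le> fobj d k v (\<lambda>i. Re (x i)))"
proof -
  define S where "S = {x. nrm2 d x = 1 \<and> (\<forall>i<d. Im (x i) = 0)}"
  define x0 where "x0 = (\<lambda>i::nat. if i = 0 then 1 else (0::complex))"
  have x0S: "x0 \<in> S"
  proof -
    have "nrm2 d x0 = (\<Sum>i<d. if i = 0 then 1 else 0)" unfolding nrm2_def x0_def by (intro sum.cong refl) auto
    also have "\<dots> = 1" using d0 by simp
    finally show ?thesis unfolding S_def x0_def by simp
  qed
  have "\<exists>x\<in>S. \<forall>y\<in>S. fobj d k v (\<lambda>i. Re (y i)) \<le> fobj d k v (\<lambda>i. Re (x i))"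
  proof (rule attain_max[where I="{..<d}" and B=1 and C="(\<Sum>i<d. \<bar>vdown v ! i\<bar>)^2", OF _ x0S])
    show "cmod (x i) \<le> 1" if "x \<in> S" "i \<in> {..<d}" for x i
      using that cmod_le_one unfolding S_def by auto
  next
    fix X :: "nat \<Rightarrow> nat \<Rightarrow> complex" and l assume X: "\<And>j. X j \<in> S" and l: "\<forall>i\<in>{..<d}. (\<lambda>j. X j i) \<longlonglongrightarrow> l i"
    have l': "\<forall>i<d. (\<lambda>j. X j i) \<longlonglongrightarrow> l i" using l by auto
    have "nrm2 d l = 1"
      using LIMSEQ_unique[OF tendsto_nrm2[OF l']] X unfolding S_def by auto
    moreover have "Im (l i) = 0" if "i < d" for i
    proof -
      have "(\<lambda>j. Im (X j i)) \<longlonglongrightarrow> Im (l i)" using l' that by (intro tendsto_Im) auto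
      moreover have "(\<lambda>j. Im (X j i)) = (\<lambda>j. 0)" using X that unfolding S_def by auto
      ultimately show ?thesis using LIMSEQ_unique tendsto_const by metis
    qed
    ultimately show "\<exists>y\<in>S. \<forall>i\<in>{..<d}. y i = l i" unfolding S_def by auto
  next
    fix X :: "nat \<Rightarrow> nat \<Rightarrow> complex" and y assume "\<forall>i\<in>{..<d}. (\<lambda>j. X j i) \<longlonglongrightarrow> y i"
    hence c: "\<forall>i<d. (\<lambda>j. Re (X j i)) \<longlonglongrightarrow> Re (y i)" by (auto intro: tendsto_Re)
    show "(\<lambda>j. fobj d k v (\<lambda>i. Re (X j i))) \<longlonglongrightarrow> fobj d k v (\<lambda>i. Re (y i))"
      unfolding fobj_def using c by (intro tendsto_diff tendsto_power tendsto_sum tendsto_mult tendsto_const tendsto_tk) auto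
  next
    fix x assume x: "x \<in> S"
    have "\<bar>\<Sum>i<d. Re (x i) * vdown v ! i\<bar> \<le> (\<Sum>i<d. \<bar>vdown v ! i\<bar>)"
    proof (rule order_trans[OF sum_abs], intro sum_mono)
      fix i assume "i \<in> {..<d}"
      hence "\<bar>Re (x i)\<bar> \<le> 1" using x cmod_le_one abs_Re_le_cmod order_trans unfolding S_def by fastforce
      thus "\<bar>Re (x i) * vdown v ! i\<bar> \<le> \<bar>vdown v ! i\<bar>" by (simp add: abs_mult mult_left_le_one_le)
    qed
    hence "(\<Sum>i<d. Re (x i) * vdown v ! i)^2 \<le> (\<Sum>i<d. \<bar>vdown v ! i\<bar>)^2"
      by (metis abs_ge_zero power2_abs power_mono)
    thus "fobj d k v (\<lambda>i. Re (x i)) \<le> (\<Sum>i<d. \<bar>vdown v ! i\<bar>)^2"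
      unfolding fobj_def using tk_nonneg[of d k] by (smt (verit))
  qed auto
  thus ?thesis unfolding S_def by auto
qed

lemma fobj_cong: "(\<And>i. i < d \<Longrightarrow> f i = g i) \<Longrightarrow> fobj d k v f = fobj d k v g"
proof -
  assume h: "\<And>i. i < d \<Longrightarrow> f i = g i"
  have "(\<Sum>i<d. f i * vdown v ! i) = (\<Sum>i<d. g i * vdown v ! i)" using h by (intro sum.cong) auto
  moreover have "tk d k f = tk d k g" using h by (intro tk_cong) auto
  ultimately show ?thesis unfolding fobj_def by simp
qed

lemma rep_in_Ik: "ikrep d k n p us \<Longrightarrow> mat d d (\<lambda>(a,b). sigf n p us a b) \<in> Ik d k"
  unfolding Ik_def sigf_def ikrep_def by blast

lemma vdown_unit:
  assumes v: "v \<in> carrier_vec d" and vu: "unit_cvec v"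
  shows "(\<Sum>i<d. (vdown v ! i)^2) = 1"
proof -
  obtain g where g: "bij_betw g {..<d} {..<d}" "\<And>i. i < d \<Longrightarrow> vdown v ! i = cmod (v $ g i)"
    using vdown_perm1[OF v] by blast
  have "(\<Sum>i<d. (vdown v ! i)^2) = (\<Sum>i<d. (cmod (v $ g i))^2)" using g(2) by simp
  also have "\<dots> = (\<Sum>i<d. (cmod (v $ i))^2)" using sum.reindex_bij_betw[OF g(1), of "\<lambda>i. (cmod (v $ i))^2"] by simp
  also have "\<dots> = 1" using vu v unfolding unit_cvec_def by simp
  finally show ?thesis .
qed

theorem mainTheorem4:
  fixes k d :: nat and v :: "complex vec"
  assumes "0 < k" and "k \<le> d"
    and "v \<in> carrier_vec d" and "unit_cvec v"
  shows "(\<exists>m \<in> carrier_vec d. (\<Sum>i<d. (m $ i)\<^sup>2) = 1 \<and>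
            Tk k v = (rinner_list m (vdown v))\<^sup>2 - (topk_norm k m)\<^sup>2)
       \<and> (\<forall>m \<in> carrier_vec d. (\<Sum>i<d. (m $ i)\<^sup>2) = 1 \<longrightarrow>
            (rinner_list m (vdown v))\<^sup>2 - (topk_norm k m)\<^sup>2 \<le> Tk k v)"
proof -
  note k0 = assms(1) and kd = assms(2) and v = assms(3) and vu = assms(4)
  have d0: "0 < d" using k0 kd by simp
  have dv: "dim_vec v = d" using v by simp
  obtain xs where xs: "nrm2 d xs = 1" "\<forall>i<d. Im (xs i) = 0"
    "\<And>y. nrm2 d y = 1 \<Longrightarrow> (\<forall>i<d. Im (y i) = 0) \<Longrightarrow> fobj d k v (\<lambda>i. Re (y i)) \<le> fobj d k v (\<lambda>i. Re (xs i))"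
    using exists_max[OF v d0, of k] by blast
  define M where "M = fobj d k v (\<lambda>i. Re (xs i))"
  have re1: "(\<Sum>i<d. (Re (xs i))^2) = 1"
  proof -
    have "(\<Sum>i<d. (Re (xs i))^2) = nrm2 d xs"
      unfolding nrm2_def using xs(2) by (intro sum.cong refl) (simp add: cmod_power2)
    thus ?thesis using xs(1) by simp
  qed
  have HM: "fobj d k v mr \<le> M" if mr: "(\<Sum>i<d. (mr i)^2) = 1" for mr
  proof -
    have "nrm2 d (\<lambda>i. complex_of_real (mr i)) = 1" unfolding nrm2_def using mr by simp
    hence "fobj d k v (\<lambda>i. Re (complex_of_real (mr i))) \<le> M" unfolding M_def by (intro xs(3)) auto
    thus ?thesis by simp
  qed
  have expr: "(rinner_list m (vdown v))^2 - (topk_norm k m)^2 = fobj d k v (\<lambda>i. m $ i)" if m: "m \<in> carrier_vec d" for m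
    unfolding rinner_list_def fobj_def topk_tk[OF m kd] using m by simp
  define F where "F = (\<lambda>\<sigma>. trace_norm (outer v - \<sigma>) / 2)"
  have TkF: "Tk k v = Inf (F ` Ik d k)" unfolding Tk_def F_def dv ..
  define u0 where "u0 = vec d (\<lambda>i. if i = 0 then 1 else (0::complex))"
  have gu0: "good d k u0" unfolding u0_def by (rule good_e0[OF k0 kd])
  have ik0: "ikrep d k 1 (\<lambda>_. 1) (\<lambda>_. u0)" using gu0 unfolding good_def by unfold_locales auto
  have Ine: "Ik d k \<noteq> {}" using rep_in_Ik[OF ik0] by blast
  have lowF: "M \<le> F \<sigma>" if "\<sigma> \<in> Ik d k" for \<sigma>
    unfolding M_def F_def by (rule lower_bound_sigma[OF v vu d0 that re1])
  have bddb: "bdd_below (F ` Ik d k)" using lowF by (intro bdd_belowI[of _ M]) auto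
  have LB: "M \<le> Tk k v" unfolding TkF using Ine lowF by (intro cInf_greatest) auto
  have UB: "Tk k v \<le> M"
  proof (rule ccontr)
    assume "\<not> Tk k v \<le> M"
    hence eta: "Tk k v - M > 0" by simp
    define \<delta>0 where "\<delta>0 = ((Tk k v - M) / (real d * real d))^2"
    have d0pos: "\<delta>0 > 0" unfolding \<delta>0_def using eta d0 by simp
    have M0: "M \<ge> 0"
    proof -
      have w1: "(\<Sum>i<d. (vdown v ! i)^2) = 1" by (rule vdown_unit[OF v vu])
      have "fobj d k v (\<lambda>i. vdown v ! i) = 1 - tk d k (\<lambda>i. vdown v ! i)"
        unfolding fobj_def using w1 by (simp add: power2_eq_square)
      moreover have "tk d k (\<lambda>i. vdown v ! i) \<le> 1" using tk_le_sum[of d k "\<lambda>i. vdown v ! i"] w1 by simp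
      ultimately show ?thesis using HM[OF w1] by linarith
    qed
    have gap: "dist2 d (\<lambda>a b. \<sigma>f a b - \<tau> a b) \<ge> \<delta>0" if \<sigma>f: "\<sigma>f \<in> Kset d k" and \<tau>: "\<tau> \<in> Lset d v M" for \<sigma>f \<tau>
    proof -
      obtain n p us where ik: "ikrep d k n p us" and se: "\<sigma>f = sigf n p us" using \<sigma>f unfolding Kset_def by blast
      define \<sigma> where "\<sigma> = mat d d (\<lambda>(a,b). sigf n p us a b)"
      have \<sigma>I: "\<sigma> \<in> Ik d k" unfolding \<sigma>_def by (rule rep_in_Ik[OF ik])
      have "Tk k v \<le> F \<sigma>" unfolding TkF using \<sigma>I bddb by (intro cInf_lower) auto
      obtain x0 where x0: "nrm2 d x0 = 1" "F \<sigma> = Re (qf d (Dm v n p us) x0)"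
        using F_char[OF v vu d0 ik \<sigma>_def] unfolding F_def by blast
      have "qf d (Dm v n p us) x0 = qf d (\<lambda>a b. rho v a b - \<tau> a b) x0 + qf d (\<lambda>a b. \<tau> a b - sigf n p us a b) x0"
        unfolding Dm_def qf_diff by simp
      hence "F \<sigma> = Re (qf d (\<lambda>a b. rho v a b - \<tau> a b) x0) + Re (qf d (\<lambda>a b. \<tau> a b - sigf n p us a b) x0)"
        using x0(2) by simp
      also have "Re (qf d (\<lambda>a b. rho v a b - \<tau> a b) x0) \<le> M" using \<tau> x0(1) unfolding Lset_def by auto
      also have "Re (qf d (\<lambda>a b. \<tau> a b - sigf n p us a b) x0) \<le> real d * real d * sqrt (dist2 d (\<lambda>a b. \<tau> a b - sigf n p us a b))"
        using qf_bound_dist2[OF x0(1)] complex_Re_le_cmod order_trans by blast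
      also have "dist2 d (\<lambda>a b. \<tau> a b - sigf n p us a b) = dist2 d (\<lambda>a b. \<sigma>f a b - \<tau> a b)"
        unfolding dist2_def se by (simp add: norm_minus_commute)
      finally have "Tk k v - M \<le> real d * real d * sqrt (dist2 d (\<lambda>a b. \<sigma>f a b - \<tau> a b))"
        using \<open>Tk k v \<le> F \<sigma>\<close> by linarith
      hence "(Tk k v - M) / (real d * real d) \<le> sqrt (dist2 d (\<lambda>a b. \<sigma>f a b - \<tau> a b))"
        using d0 by (simp add: divide_le_eq mult.commute)
      hence "((Tk k v - M) / (real d * real d))^2 \<le> (sqrt (dist2 d (\<lambda>a b. \<sigma>f a b - \<tau> a b)))^2"
        using eta d0 by (intro power_mono) auto
      thus ?thesis unfolding \<delta>0_def using dist2_nonneg by simp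
    qed
    have K0: "(\<lambda>a b. u0 $ a * cnj (u0 $ b)) \<in> Kset d k" by (rule rank1_K[OF gu0])
    have L0: "(\<lambda>a b. rho v a b - complex_of_real M * (if a = b then 1 else 0) + complex_of_real 0 * (x0 a * cnj (x0 b))) \<in> Lset d v M"
      for x0 :: "nat \<Rightarrow> complex" by (rule tau_L) simp
    have Kc: "comb s A B \<in> Kset d k" if AK: "A \<in> Kset d k" and BK: "B \<in> Kset d k" and s01: "0 \<le> s" "s \<le> 1" for A B s
    proof -
      obtain n1 p1 us1 where r1: "ikrep d k n1 p1 us1" "A = sigf n1 p1 us1" using AK unfolding Kset_def by blast
      obtain n2 p2 us2 where r2: "ikrep d k n2 p2 us2" "B = sigf n2 p2 us2" using BK unfolding Kset_def by blast
      obtain n p us where "ikrep d k n p us" "comb s A B = sigf n p us"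
        using K_conv[OF r1(1) r2(1) s01] r1(2) r2(2) by blast
      thus ?thesis unfolding Kset_def by blast
    qed
    obtain Y \<delta> where Y: "\<delta> > 0" "\<forall>\<sigma>\<in>Kset d k. \<forall>\<tau>\<in>Lset d v M. Re (mip d Y (\<lambda>a b. \<sigma> a b - \<tau> a b)) \<ge> \<delta>"
      using separation[OF K0 L0 Kc L_conv gap d0pos] by blast
    show False by (rule upper_main[OF v vu k0 kd HM M0 Y(1) Y(2)])
  qed
  have TM: "Tk k v = M" using LB UB by simp
  define ms where "ms = vec d (\<lambda>i. Re (xs i))"
  have ms: "ms \<in> carrier_vec d" unfolding ms_def by simp
  have ms1: "(\<Sum>i<d. (ms $ i)^2) = 1" unfolding ms_def using re1 by simp
  have "(rinner_list ms (vdown v))^2 - (topk_norm k ms)^2 = fobj d k v (\<lambda>i. ms $ i)" by (rule expr[OF ms])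
  also have "\<dots> = M" unfolding M_def ms_def by (intro fobj_cong) simp
  finally have "(rinner_list ms (vdown v))^2 - (topk_norm k ms)^2 = M" .
  hence part1: "\<exists>m \<in> carrier_vec d. (\<Sum>i<d. (m $ i)\<^sup>2) = 1 \<and> Tk k v = (rinner_list m (vdown v))\<^sup>2 - (topk_norm k m)\<^sup>2"
    using ms ms1 TM by auto
  have part2: "\<forall>m \<in> carrier_vec d. (\<Sum>i<d. (m $ i)\<^sup>2) = 1 \<longrightarrow> (rinner_list m (vdown v))\<^sup>2 - (topk_norm k m)\<^sup>2 \<le> Tk k v"
    using expr HM TM by simp
  show ?thesis using part1 part2 by blast
qed

end
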